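(* In the setting below, there is an absolute constant $C'>0$ such that the random variable $E^{\mathbf L,\pi}_{n_1}=\mathbb E[U^{\mathbf L,\pi}_{n_1}\mid\mathbf L,\pi]$ is $\mathrm{SE}(C'\,\mathbb E[U_{n_1,n_2}]/n_1)$.
   Context: Setting: $2\le n_1\le n_2$; $\mathbf Z_1,\dots,\mathbf Z_{n_1},\mathbf W_1,\dots,\mathbf W_{n_2}$ mutually independent random vectors in $\mathbb R^d$, the $\mathbf Z_i$ identically distributed, the $\mathbf W_{i'}$ identically distributed, each sub-Gaussian. Pooled sample $\mathbf D_i=\mathbf Z_i$ ($i\le n_1$), $\mathbf D_{n_1+i'}=\mathbf W_{i'}$. Let $\pi$ be uniform on $S_{n_1+n_2}$ and $\mathbf L=(l_1,\dots,l_{n_1})$ a uniformly random $n_1$-tuple of distinct elements of $[n_2]$, with $\pi$, $\mathbf L$ and the data mutually independent. Define $U^{\mathbf L,\pi}_{n_1}=\frac{1}{n_1(n_1-1)}\sum_{i\ne j,\ i,j\in[n_1]}(\mathbf D_{\pi(i)}-\mathbf D_{\pi(n_1+l_i)})^T(\mathbf D_{\pi(j)}-\mathbf D_{\pi(n_1+l_j)})$. Here $\mathbb E[U_{n_1,n_2}]=\|\mathbb E\mathbf Z_1-\mathbb E\mathbf W_1\|_2^2$. A real random variable $X$ is $\mathrm{SE}(\sigma)$ if $\mathbb E[\exp\{\lambda(X-\mathbb EX)\}]\le\exp(\lambda^2\sigma^2)$ for all $|\lambda|\le1/\sigma$. *)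

theory Defs
  imports "HOL-Probability.Probability"
begin

text \<open>Vectors of R^d are represented as functions nat => real; only the
coordinates k < d matter. The dimension d is an explicit natural number so
that the constant C' can be stated to be independent of d.\<close>

definition ipd :: "nat \<Rightarrow> (nat \<Rightarrow> real) \<Rightarrow> (nat \<Rightarrow> real) \<Rightarrow> real" where
  "ipd d a b = (\<Sum>k<d. a k * b k)"

definition mean_vec :: "(nat \<Rightarrow> real) measure \<Rightarrow> nat \<Rightarrow> real" where
  "mean_vec P = (\<lambda>k. \<integral>x. x k \<partial>P)"

definition subgaussian_vec :: "nat \<Rightarrow> (nat \<Rightarrow> real) measure \<Rightarrow> bool" where
  "subgaussian_vec d P \<longleftrightarrow>
     (\<forall>k<d. integrable P (\<lambda>x. x k)) \<and>
     (\<exists>\<sigma>>0. \<forall>u. ipd d u u = 1 \<longrightarrow> (\<forall>t::real.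
        integrable P (\<lambda>x. exp (t * ipd d u (x - mean_vec P))) \<and>
        (\<integral>x. exp (t * ipd d u (x - mean_vec P)) \<partial>P) \<le> exp (t\<^sup>2 * \<sigma>\<^sup>2 / 2)))"

definition SE :: "'a measure \<Rightarrow> ('a \<Rightarrow> real) \<Rightarrow> real \<Rightarrow> bool" where
  "SE M X \<sigma> \<longleftrightarrow> (\<forall>t::real. \<sigma> * \<bar>t\<bar> \<le> 1 \<longrightarrow>
      integrable M (\<lambda>\<omega>. exp (t * (X \<omega> - (\<integral>\<omega>'. X \<omega>' \<partial>M)))) \<and>
      (\<integral>\<omega>. exp (t * (X \<omega> - (\<integral>\<omega>'. X \<omega>' \<partial>M))) \<partial>M) \<le> exp (t\<^sup>2 * \<sigma>\<^sup>2))"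

text \<open>Joint law of the pooled sample D_0,...,D_{n1+n2-1} (0-based):
independent, D_k ~ P for k < n1 (the Z's), D_k ~ Q otherwise (the W's).\<close>
definition data_law :: "nat \<Rightarrow> nat \<Rightarrow> (nat \<Rightarrow> real) measure \<Rightarrow> (nat \<Rightarrow> real) measure
    \<Rightarrow> (nat \<Rightarrow> (nat \<Rightarrow> real)) measure" where
  "data_law n1 n2 P Q = (\<Pi>\<^sub>M k\<in>{..<n1+n2}. if k < n1 then P else Q)"

definition perm_tuples :: "nat \<Rightarrow> nat \<Rightarrow> ((nat \<Rightarrow> nat) \<times> nat list) set" where
  "perm_tuples n1 n2 = {p. p permutes {..<n1+n2}} \<times>
                       {l. distinct l \<and> length l = n1 \<and> set l \<subseteq> {..<n2}}"

definition piL_law :: "nat \<Rightarrow> nat \<Rightarrow> ((nat \<Rightarrow> nat) \<times> nat list) measure" where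
  "piL_law n1 n2 = measure_pmf (pmf_of_set (perm_tuples n1 n2))"

definition joint_law :: "nat \<Rightarrow> nat \<Rightarrow> (nat \<Rightarrow> real) measure \<Rightarrow> (nat \<Rightarrow> real) measure
    \<Rightarrow> ((nat \<Rightarrow> (nat \<Rightarrow> real)) \<times> ((nat \<Rightarrow> nat) \<times> nat list)) measure" where
  "joint_law n1 n2 P Q = data_law n1 n2 P Q \<Otimes>\<^sub>M piL_law n1 n2"

definition piL_sigma :: "nat \<Rightarrow> nat \<Rightarrow> (nat \<Rightarrow> real) measure \<Rightarrow> (nat \<Rightarrow> real) measure
    \<Rightarrow> ((nat \<Rightarrow> (nat \<Rightarrow> real)) \<times> ((nat \<Rightarrow> nat) \<times> nat list)) measure" where
  "piL_sigma n1 n2 P Q = vimage_algebra (space (joint_law n1 n2 P Q)) snd (piL_law n1 n2)"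

text \<open>U^{L,pi}_{n1} with 0-based indices: D_{pi(n1+l_i)} becomes x (p (n1 + l!i)).\<close>
definition U_stat :: "nat \<Rightarrow> nat \<Rightarrow> (nat \<Rightarrow> nat) \<Rightarrow> nat list \<Rightarrow> (nat \<Rightarrow> (nat \<Rightarrow> real)) \<Rightarrow> real" where
  "U_stat d n1 p l x = (1 / (real n1 * (real n1 - 1))) *
     (\<Sum>i<n1. \<Sum>j\<in>{..<n1} - {i}.
        ipd d (x (p i) - x (p (n1 + l ! i))) (x (p j) - x (p (n1 + l ! j))))"

definition U_joint :: "nat \<Rightarrow> nat \<Rightarrow> ((nat \<Rightarrow> (nat \<Rightarrow> real)) \<times> ((nat \<Rightarrow> nat) \<times> nat list)) \<Rightarrow> real" where
  "U_joint d n1 \<omega> = U_stat d n1 (fst (snd \<omega>)) (snd (snd \<omega>)) (fst \<omega>)"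

definition E_Lpi :: "nat \<Rightarrow> nat \<Rightarrow> nat \<Rightarrow> (nat \<Rightarrow> real) measure \<Rightarrow> (nat \<Rightarrow> real) measure
    \<Rightarrow> ((nat \<Rightarrow> (nat \<Rightarrow> real)) \<times> ((nat \<Rightarrow> nat) \<times> nat list)) \<Rightarrow> real" where
  "E_Lpi d n1 n2 P Q = real_cond_exp (joint_law n1 n2 P Q) (piL_sigma n1 n2 P Q) (U_joint d n1)"

end

theory Submission
  imports Defs
begin

lemma perm_prod_le:
  fixes S :: "'a set" and G :: "'a set"
  assumes "finite S" "I \<subseteq> S"
  shows "(\<Sum>p\<in>{p. p permutes S}. \<Prod>i\<in>I. of_bool (p i \<in> G) :: real)
          \<le> fact (card S) * (real (card (G \<inter> S)) / real (card S)) ^ card I"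
  using assms
proof (induction "card I" arbitrary: S I G)
  case 0
  then have "I = {}" using finite_subset by fastforce
  then show ?case using card_permutations[OF refl 0(2)] by simp
next
  case (Suc k)
  have fI: "finite I" using Suc.prems finite_subset by blast
  obtain a where aI: "a \<in> I" using Suc.hyps(2) by fastforce
  define S' where "S' = S - {a}"
  define I' where "I' = I - {a}"
  have aS: "a \<in> S" using aI Suc.prems by blast
  have S_eq: "S = insert a S'" and aS': "a \<notin> S'" using aS by (auto simp: S'_def)
  have fS': "finite S'" using Suc.prems by (simp add: S'_def)
  have I_eq: "I = insert a I'" and aI': "a \<notin> I'" using aI by (auto simp: I'_def)
  have kI': "k = card I'" using Suc.hyps(2) fI by (simp add: I'_def card_Diff_singleton aI)
  have I'S': "I' \<subseteq> S'" using Suc.prems by (auto simp: I'_def S'_def)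
  define g where "g = card (G \<inter> S)"
  define N where "N = card S"
  have NS': "card S' = N - 1" using Suc.prems aS by (simp add: S'_def N_def)
  have N1: "N \<ge> 1" using aS Suc.prems unfolding N_def
    by (metis One_nat_def Suc_leI card_gt_0_iff empty_iff finite_subset subset_refl)
  have gN: "g \<le> N" unfolding g_def N_def by (intro card_mono Suc.prems) auto
  let ?F = "\<lambda>G p. \<Prod>i\<in>I. of_bool (p i \<in> G) :: real"
  have key: "?F G (Transposition.transpose a b \<circ> q) = of_bool (b \<in> G) * (\<Prod>i\<in>I'. of_bool (q i \<in> Transposition.transpose a b -` G))"
    if q: "q permutes S'" for b q
  proof -
    have qa: "q a = a" using permutes_not_in[OF q aS'] .
    have fI': "finite I'" using fI by (simp add: I'_def)
    have "?F G (Transposition.transpose a b \<circ> q) = (\<Prod>i\<in>insert a I'. of_bool (Transposition.transpose a b (q i) \<in> G))"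
      by (subst I_eq[symmetric]) simp
    also have "\<dots> = of_bool (Transposition.transpose a b (q a) \<in> G) * (\<Prod>i\<in>I'. of_bool (Transposition.transpose a b (q i) \<in> G))"
      by (rule prod.insert[OF fI' aI'])
    finally show ?thesis by (simp add: qa)
  qed
  have cardH: "card (Transposition.transpose a b -` G \<inter> S') = g - 1" if b: "b \<in> G \<inter> S" for b
  proof -
    have bS: "b \<in> S" using b by blast
    have tS: "Transposition.transpose a b x \<in> S \<longleftrightarrow> x \<in> S" for x
      using permutes_in_image[OF permutes_swap_id[OF aS bS]] .
    have eq: "Transposition.transpose a b -` G \<inter> S = Transposition.transpose a b ` (G \<inter> S)"
    proof
      show "Transposition.transpose a b -` G \<inter> S \<subseteq> Transposition.transpose a b ` (G \<inter> S)"
      proof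
        fix x assume "x \<in> Transposition.transpose a b -` G \<inter> S"
        then show "x \<in> Transposition.transpose a b ` (G \<inter> S)" using tS
          by (intro image_eqI[of _ _ "Transposition.transpose a b x"]) auto
      qed
    qed (auto simp: tS)
    have c1: "card (Transposition.transpose a b -` G \<inter> S) = g"
      unfolding eq g_def by (rule card_image) simp
    have "Transposition.transpose a b -` G \<inter> S' = (Transposition.transpose a b -` G \<inter> S) - {a}"
      by (auto simp: S'_def)
    moreover have "a \<in> Transposition.transpose a b -` G \<inter> S" using b aS by auto
    ultimately show ?thesis using c1 Suc.prems(2)
      by (simp add: card_Diff_singleton_if finite_subset)
  qed
  have step: "(\<Sum>p\<in>{p. p permutes S}. ?F G p)
      = (\<Sum>b\<in>S. of_bool (b \<in> G) * (\<Sum>q\<in>{q. q permutes S'}. \<Prod>i\<in>I'. of_bool (q i \<in> Transposition.transpose a b -` G)))"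
  proof -
    have "(\<Sum>p\<in>{p. p permutes S}. ?F G p) = (\<Sum>b\<in>insert a S'. \<Sum>q\<in>{q. q permutes S'}. ?F G (Transposition.transpose a b \<circ> q))"
      using sum_over_permutations_insert[OF fS' aS', of "?F G"] S_eq by (simp add: comp_def)
    also have "\<dots> = (\<Sum>b\<in>S. of_bool (b \<in> G) * (\<Sum>q\<in>{q. q permutes S'}. \<Prod>i\<in>I'. of_bool (q i \<in> Transposition.transpose a b -` G)))"
      unfolding S_eq[symmetric]
      by (intro sum.cong refl, subst sum_distrib_left, intro sum.cong refl) (simp add: key[unfolded o_def])
    finally show ?thesis .
  qed
  also have "\<dots> \<le> (\<Sum>b\<in>S. of_bool (b \<in> G) * (fact (N - 1) * (real (g - 1) / real (N - 1)) ^ k))"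
  proof (intro sum_mono)
    fix b assume bS: "b \<in> S"
    show "of_bool (b \<in> G) * (\<Sum>q\<in>{q. q permutes S'}. \<Prod>i\<in>I'. of_bool (q i \<in> Transposition.transpose a b -` G))
          \<le> of_bool (b \<in> G) * (fact (N - 1) * (real (g - 1) / real (N - 1)) ^ k)"
    proof (cases "b \<in> G")
      case True
      then show ?thesis using Suc.hyps(1)[OF kI' fS' I'S', of "Transposition.transpose a b -` G"]
        cardH[of b] bS NS' kI' by simp
    qed simp
  qed
  also have "\<dots> = real g * (fact (N - 1) * (real (g - 1) / real (N - 1)) ^ k)"
    by (simp add: sum.If_cases Suc.prems(1) g_def Int_commute)
  also have "\<dots> \<le> fact N * (real g / real N) ^ Suc k"
  proof -
    have fN: "(fact N :: real) = real N * fact (N - 1)"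
      using N1 by (metis Suc_diff_1 fact_Suc less_le_trans zero_less_one of_nat_fact)
    have le: "real (g - 1) / real (N - 1) \<le> real g / real N"
    proof (cases "N = 1")
      case True then show ?thesis by simp
    next
      case False
      then have "N - 1 > 0" using N1 by simp
      then show ?thesis using N1 gN
        by (simp add: divide_simps of_nat_diff) (cases "g = 0"; simp add: of_nat_diff algebra_simps)
    qed
    have "((real (g - 1) / real (N - 1)) ^ k) \<le> (real g / real N) ^ k"
      by (intro power_mono le) simp
    then have "real g * (fact (N - 1) * (real (g - 1) / real (N - 1)) ^ k)
       \<le> real g * (fact (N - 1) * (real g / real N) ^ k)"
      by (intro mult_left_mono) auto
    also have "\<dots> = fact N * (real g / real N) ^ Suc k"
      using N1 by (simp add: fN)
    finally show ?thesis .
  qed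
  finally show ?case unfolding N_def g_def Suc.hyps(2)[symmetric] .
qed
lemma bern_mgf:
  fixes t q :: real
  assumes "t \<ge> 0" "q \<ge> 0"
  shows "1 + q * (exp t - 1) \<le> exp (t * q + t\<^sup>2 / 8)"
proof -
  have pos: "1 + q * (exp t - 1) > 0" using assms
    by (smt (verit) mult_nonneg_nonneg one_le_exp_iff)
  have "-t * q + ln (1 + q * (exp t - 1)) \<le> t\<^sup>2 / 8"
    using Hoeffdings_lemma_aux[OF assms] by simp
  then have "ln (1 + q * (exp t - 1)) \<le> t * q + t\<^sup>2 / 8" by simp
  then show ?thesis using pos by (metis exp_le_cancel_iff exp_ln)
qed

lemma perm_mgf_pos:
  fixes S :: "'a set" and G :: "'a set" and t :: real
  assumes "finite S" "I \<subseteq> S" "S \<noteq> {}" "t \<ge> 0"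
  shows "(\<Sum>p\<in>{p. p permutes S}. exp (t * (\<Sum>i\<in>I. of_bool (p i \<in> G))))
          \<le> fact (card S) * exp (real (card I) * (t * (real (card (G \<inter> S)) / real (card S)) + t\<^sup>2 / 8))"
proof -
  define q where "q = real (card (G \<inter> S)) / real (card S)"
  define c where "c = exp t - 1"
  have c0: "c \<ge> 0" using assms(4) by (simp add: c_def)
  have q0: "q \<ge> 0" by (simp add: q_def)
  have fI: "finite I" using assms finite_subset by blast
  have e1: "exp (t * (\<Sum>i\<in>I. of_bool (p i \<in> G))) = (\<Sum>J\<in>Pow I. c ^ card J * (\<Prod>i\<in>J. of_bool (p i \<in> G)))" for p
  proof -
    have "exp (t * (\<Sum>i\<in>I. of_bool (p i \<in> G))) = (\<Prod>i\<in>I. c * of_bool (p i \<in> G) + 1)"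
      unfolding sum_distrib_left exp_sum[OF fI] by (intro prod.cong refl) (simp add: c_def)
    also have "\<dots> = (\<Sum>J\<in>Pow I. (\<Prod>i\<in>J. c * of_bool (p i \<in> G)) * (\<Prod>i\<in>I - J. 1))"
      by (rule prod_add[OF fI])
    also have "\<dots> = (\<Sum>J\<in>Pow I. c ^ card J * (\<Prod>i\<in>J. of_bool (p i \<in> G)))"
      by (intro sum.cong refl) (simp add: prod.distrib)
    finally show ?thesis .
  qed
  have "(\<Sum>p\<in>{p. p permutes S}. exp (t * (\<Sum>i\<in>I. of_bool (p i \<in> G))))
      = (\<Sum>J\<in>Pow I. c ^ card J * (\<Sum>p\<in>{p. p permutes S}. \<Prod>i\<in>J. of_bool (p i \<in> G)))"
    unfolding e1 by (subst sum.swap) (simp add: sum_distrib_left)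
  also have "\<dots> \<le> (\<Sum>J\<in>Pow I. c ^ card J * (fact (card S) * q ^ card J))"
    unfolding q_def
    by (intro sum_mono mult_left_mono perm_prod_le assms(1)) (use assms(2) c0 in auto)
  also have "\<dots> = fact (card S) * (\<Sum>J\<in>Pow I. (\<Prod>i\<in>J. c * q) * (\<Prod>i\<in>I - J. 1))"
    by (simp add: sum_distrib_left power_mult_distrib mult_ac)
  also have "\<dots> = fact (card S) * (\<Prod>i\<in>I. c * q + 1)"
    by (subst prod_add[OF fI]) simp
  also have "\<dots> = fact (card S) * (1 + q * (exp t - 1)) ^ card I"
    by (simp add: c_def mult_ac add_ac)
  also have "\<dots> \<le> fact (card S) * exp (t * q + t\<^sup>2 / 8) ^ card I"
    by (intro mult_left_mono power_mono bern_mgf assms(4) q0)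
       (use c0 q0 c_def in auto)
  also have "\<dots> = fact (card S) * exp (real (card I) * (t * q + t\<^sup>2 / 8))"
    by (simp add: exp_of_nat_mult)
  finally show ?thesis unfolding q_def .
qed

lemma perm_mgf_nn:
  fixes S :: "'a set" and G :: "'a set" and t :: real
  assumes "finite S" "I \<subseteq> S" "S \<noteq> {}" "t \<ge> 0"
  shows "(\<Sum>p\<in>{p. p permutes S}. exp (t * ((\<Sum>i\<in>I. of_bool (p i \<in> G)) - real (card I) * (real (card (G \<inter> S)) / real (card S)))))
          \<le> fact (card S) * exp (real (card I) * t\<^sup>2 / 8)"
proof -
  note True = assms(4)
  have "(\<Sum>p\<in>{p. p permutes S}. exp (t * ((\<Sum>i\<in>I. of_bool (p i \<in> G)) - real (card I) * (real (card (G \<inter> S)) / real (card S)))))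
    = exp (- t * real (card I) * (real (card (G \<inter> S)) / real (card S))) * (\<Sum>p\<in>{p. p permutes S}. exp (t * (\<Sum>i\<in>I. of_bool (p i \<in> G))))"
    by (simp add: sum_distrib_left exp_diff exp_minus field_simps right_diff_distrib)
  also have "\<dots> \<le> exp (- t * real (card I) * (real (card (G \<inter> S)) / real (card S))) * (fact (card S) * exp (real (card I) * (t * (real (card (G \<inter> S)) / real (card S)) + t\<^sup>2 / 8)))"
    by (intro mult_left_mono perm_mgf_pos assms(1-3) True) simp
  also have "\<dots> = fact (card S) * exp (- t * real (card I) * (real (card (G \<inter> S)) / real (card S)) + real (card I) * (t * (real (card (G \<inter> S)) / real (card S)) + t\<^sup>2 / 8))"
    by (simp only: exp_add mult_ac)
  also have "\<dots> = fact (card S) * exp (real (card I) * t\<^sup>2 / 8)"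
    by (rule arg_cong[where f="\<lambda>x. fact (card S) * exp x"]) (simp add: algebra_simps)
  finally show ?thesis .
qed

lemma perm_mgf:
  fixes S :: "'a set" and G :: "'a set" and t :: real
  assumes "finite S" "I \<subseteq> S" "S \<noteq> {}"
  shows "(\<Sum>p\<in>{p. p permutes S}. exp (t * ((\<Sum>i\<in>I. of_bool (p i \<in> G)) - real (card I) * (real (card (G \<inter> S)) / real (card S)))))
          \<le> fact (card S) * exp (real (card I) * t\<^sup>2 / 8)"
proof (cases "t \<ge> 0")
  case True
  then show ?thesis using perm_mgf_nn[OF assms] by blast
next
  case False
  define G' where "G' = - G"
  have fS: "finite S" using assms by simp
  have cG: "real (card (G' \<inter> S)) = real (card S) - real (card (G \<inter> S))"
  proof -
    have "G' \<inter> S = S - (G \<inter> S)" by (auto simp: G'_def)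
    then show ?thesis using fS by (simp add: card_Diff_subset finite_subset of_nat_diff card_mono)
  qed
  have cS: "real (card S) > 0" using assms by (simp add: card_gt_0_iff)
  have fI: "finite I" using assms finite_subset by blast
  have eq: "t * ((\<Sum>i\<in>I. of_bool (p i \<in> G)) - real (card I) * (real (card (G \<inter> S)) / real (card S)))
     = (-t) * ((\<Sum>i\<in>I. of_bool (p i \<in> G')) - real (card I) * (real (card (G' \<inter> S)) / real (card S)))" for p
  proof -
    have h: "(\<Sum>i\<in>I. of_bool (p i \<in> G)) = real (card I) - (\<Sum>i\<in>I. of_bool (p i \<in> G'))"
    proof -
      have "(\<Sum>i\<in>I. of_bool (p i \<in> G) + of_bool (p i \<in> G')) = (\<Sum>i\<in>I. (1::real))"
        by (intro sum.cong refl) (auto simp: G'_def)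
      then show ?thesis by (simp add: sum.distrib)
    qed
    show ?thesis unfolding h cG using cS by (simp add: field_simps)
  qed
  show ?thesis unfolding eq using perm_mgf_nn[OF assms, of "-t" G'] False by simp
qed

definition sv :: "nat \<Rightarrow> (nat \<Rightarrow> nat) \<Rightarrow> nat list \<Rightarrow> nat \<Rightarrow> real" where
  "sv n1 p l i = of_bool (p i < n1) - of_bool (p (n1 + l ! i) < n1)"

definition Ssum :: "nat \<Rightarrow> (nat \<Rightarrow> nat) \<Rightarrow> nat list \<Rightarrow> real" where
  "Ssum n1 p l = (\<Sum>i<n1. sv n1 p l i)"

definition Lists :: "nat \<Rightarrow> nat \<Rightarrow> nat list set" where
  "Lists n1 n2 = {l. distinct l \<and> length l = n1 \<and> set l \<subseteq> {..<n2}}"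

lemma perm_tuples_eq: "perm_tuples n1 n2 = {p. p permutes {..<n1+n2}} \<times> Lists n1 n2"
  by (simp add: perm_tuples_def Lists_def)

lemma finite_Lists: "finite (Lists n1 n2)"
proof -
  have "Lists n1 n2 \<subseteq> {l. set l \<subseteq> {..<n2} \<and> length l = n1}" by (auto simp: Lists_def)
  then show ?thesis using finite_lists_length_eq[of "{..<n2}" n1] finite_subset by blast
qed

lemma card_perm_tuples: "card (perm_tuples n1 n2) = fact (n1 + n2) * card (Lists n1 n2)"
  unfolding perm_tuples_eq card_cartesian_product by (simp add: card_permutations)

lemma S_mgf_l:
  assumes l: "l \<in> Lists n1 n2" and n1: "n1 \<ge> 1"
  shows "(\<Sum>p\<in>{p. p permutes {..<n1+n2}}. exp (t * Ssum n1 p l)) \<le> fact (n1 + n2) * exp (real n1 * t\<^sup>2 / 2)"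
proof -
  define N where "N = n1 + n2"
  define S where "S = {..<N}"
  define G where "G = {..<n1}"
  define R where "R = (\<lambda>i. n1 + l ! i) ` {..<n1}"
  define m where "m = real n1 * (real (card (G \<inter> S)) / real (card S))"
  have inj: "inj_on (\<lambda>i. n1 + l ! i) {..<n1}"
    using l by (auto simp: Lists_def inj_on_def nth_eq_iff_index_eq)
  have cR: "card R = n1" unfolding R_def using card_image[OF inj] by simp
  have RS: "R \<subseteq> S"
  proof
    fix j assume "j \<in> R"
    then obtain i where i: "i < n1" "j = n1 + l ! i" by (auto simp: R_def)
    have "l ! i \<in> set l" using i l by (auto simp: Lists_def)
    then have "l ! i < n2" using l by (auto simp: Lists_def)
    then show "j \<in> S" using i by (simp add: S_def N_def)
  qed
  have GS: "{..<n1} \<subseteq> S" by (auto simp: S_def N_def)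
  have Sne: "S \<noteq> {}" using n1 by (auto simp: S_def N_def)
  have fS: "finite S" by (simp add: S_def)
  define A where "A p = (\<Sum>i\<in>{..<n1}. of_bool (p i \<in> G) :: real)" for p :: "nat \<Rightarrow> nat"
  define B where "B p = (\<Sum>j\<in>R. of_bool (p j \<in> G) :: real)" for p :: "nat \<Rightarrow> nat"
  have SAB: "Ssum n1 p l = (A p - m) - (B p - m)" for p
  proof -
    have "(\<Sum>i<n1. of_bool (p (n1 + l ! i) < n1) :: real) = B p"
      unfolding B_def R_def by (subst sum.reindex[OF inj]) (simp add: G_def)
    then show ?thesis unfolding Ssum_def sv_def sum_subtractf A_def by (simp add: G_def)
  qed
  have amgm: "exp (t * Ssum n1 p l) \<le> (exp ((2*t) * (A p - m)) + exp ((-2*t) * (B p - m))) / 2" for p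
  proof -
    have "exp (t * Ssum n1 p l) = exp (t * (A p - m)) * exp (- t * (B p - m))"
      unfolding SAB by (simp add: mult_exp_exp algebra_simps)
    also have "\<dots> \<le> ((exp (t * (A p - m)))\<^sup>2 + (exp (- t * (B p - m)))\<^sup>2) / 2"
      using sum_squares_bound[of "exp (t * (A p - m))" "exp (- t * (B p - m))"] by simp
    also have "\<dots> = (exp ((2*t) * (A p - m)) + exp ((-2*t) * (B p - m))) / 2"
    proof -
      have "(exp (t * (A p - m)))\<^sup>2 = exp ((2*t) * (A p - m))"
        using exp_double[of "t * (A p - m)"] by (simp add: mult.assoc)
      moreover have "(exp (- t * (B p - m)))\<^sup>2 = exp ((-2*t) * (B p - m))"
        using exp_double[of "- t * (B p - m)"] by (simp add: mult.assoc)
      ultimately show ?thesis by simp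
    qed
    finally show ?thesis .
  qed
  have hA: "(\<Sum>p\<in>{p. p permutes S}. exp ((2*t) * (A p - m))) \<le> fact (card S) * exp (real n1 * (2*t)\<^sup>2 / 8)"
    using perm_mgf[OF fS GS Sne, where G=G and t="2*t"] unfolding A_def m_def by simp
  have hB: "(\<Sum>p\<in>{p. p permutes S}. exp ((-2*t) * (B p - m))) \<le> fact (card S) * exp (real n1 * (-2*t)\<^sup>2 / 8)"
    using perm_mgf[OF fS RS Sne, where G=G and t="-2*t"] unfolding B_def m_def cR by simp
  have "(\<Sum>p\<in>{p. p permutes S}. exp (t * Ssum n1 p l))
      \<le> (\<Sum>p\<in>{p. p permutes S}. (exp ((2*t) * (A p - m)) + exp ((-2*t) * (B p - m))) / 2)"
    by (intro sum_mono amgm)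
  also have "\<dots> = ((\<Sum>p\<in>{p. p permutes S}. exp ((2*t) * (A p - m))) + (\<Sum>p\<in>{p. p permutes S}. exp ((-2*t) * (B p - m)))) / 2"
    by (simp only: sum_divide_distrib[symmetric] sum.distrib)
  also have "\<dots> \<le> (fact (card S) * exp (real n1 * (2*t)\<^sup>2 / 8) + fact (card S) * exp (real n1 * (-2*t)\<^sup>2 / 8)) / 2"
    using hA hB by simp
  also have "\<dots> = fact N * exp (real n1 * t\<^sup>2 / 2)"
    by (simp add: S_def power2_eq_square field_simps)
  finally show ?thesis by (simp add: S_def N_def)
qed

lemma S_mgf:
  fixes n1 n2 :: nat and t :: real
  assumes n1: "n1 \<ge> 1"
  shows "(\<Sum>\<omega>\<in>perm_tuples n1 n2. exp (t * Ssum n1 (fst \<omega>) (snd \<omega>))) \<le> real (card (perm_tuples n1 n2)) * exp (real n1 * t\<^sup>2 / 2)"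
proof -
  have "(\<Sum>\<omega>\<in>perm_tuples n1 n2. exp (t * Ssum n1 (fst \<omega>) (snd \<omega>)))
      = (\<Sum>l\<in>Lists n1 n2. \<Sum>p\<in>{p. p permutes {..<n1+n2}}. exp (t * Ssum n1 p l))"
    unfolding perm_tuples_eq by (subst sum.swap) (simp add: sum.cartesian_product split_def)
  also have "\<dots> \<le> (\<Sum>l\<in>Lists n1 n2. fact (n1 + n2) * exp (real n1 * t\<^sup>2 / 2))"
    by (intro sum_mono S_mgf_l n1)
  also have "\<dots> = real (card (perm_tuples n1 n2)) * exp (real n1 * t\<^sup>2 / 2)"
    by (simp add: card_perm_tuples)
  finally show ?thesis .
qed


lemma exp_sums_div: "(\<lambda>n. x ^ n / fact n) sums exp (x::real)"
  using exp_converges[of x] by (simp add: divide_inverse mult.commute)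

lemma pow_fact_le_exp:
  fixes x :: real
  assumes "x \<ge> 0"
  shows "x ^ n / fact n \<le> exp x"
proof -
  have s: "(\<lambda>n. x ^ n / fact n) sums exp x"
    using exp_converges[of x] by (simp add: divide_inverse mult.commute)
  have "sum (\<lambda>n. x ^ n / fact n) {n} \<le> suminf (\<lambda>n. x ^ n / fact n)"
    by (rule sum_le_suminf) (use s assms in \<open>auto simp: sums_iff\<close>)
  then show ?thesis using s by (simp add: sums_iff)
qed

lemma fact_double_le: "(fact (2*k) :: real) \<le> fact k * (2 * real k) ^ k"
proof -
  have d: "fact k dvd (fact (2*k) :: nat)" by (rule fact_dvd) simp
  have le: "fact (2*k) div fact k \<le> (2*k) ^ k"
    using fact_div_fact_le_pow[of k "2*k"] by simp
  have "(fact (2*k) :: nat) = fact k * (fact (2*k) div fact k)" using d by simp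
  then have "(fact (2*k) :: real) = fact k * real (fact (2*k) div fact k)"
    by (metis of_nat_fact of_nat_mult)
  also have "\<dots> \<le> fact k * real ((2*k) ^ k)"
    using le by (intro mult_left_mono) (simp only: of_nat_le_iff, simp)
  finally show ?thesis by simp
qed

lemma sq_mgf:
  fixes Z :: "'b \<Rightarrow> real" and v :: real
  assumes fin: "finite \<Omega>" and v: "v > 0"
    and mgf: "\<And>t. (\<Sum>\<omega>\<in>\<Omega>. exp (t * Z \<omega>)) \<le> real (card \<Omega>) * exp (t\<^sup>2 * v / 2)"
  shows "(\<Sum>\<omega>\<in>\<Omega>. exp ((Z \<omega>)\<^sup>2 / (4 * exp 1 * v))) \<le> real (card \<Omega>) * (8/3)"
proof -
  define a where "a = 1 / (4 * exp 1 * v)"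
  have a0: "a > 0" using v by (simp add: a_def)
  have mom: "(\<Sum>\<omega>\<in>\<Omega>. Z \<omega> ^ (2*k)) \<le> 2 * real (card \<Omega>) * exp 1 ^ k * fact (2*k) * (v / (2*k)) ^ k"
    if k: "k \<ge> 1" for k
  proof -
    define t where "t = sqrt (2*k/v)"
    have t2: "t\<^sup>2 = 2*k/v" using v by (simp add: t_def)
    have each: "(t * Z \<omega>) ^ (2*k) / fact (2*k) \<le> exp (t * Z \<omega>) + exp ((-t) * Z \<omega>)" for \<omega>
    proof -
      have "(t * Z \<omega>) ^ (2*k) = \<bar>t * Z \<omega>\<bar> ^ (2*k)" by (simp add: power_even_abs)
      then have "(t * Z \<omega>) ^ (2*k) / fact (2*k) \<le> exp \<bar>t * Z \<omega>\<bar>"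
        using pow_fact_le_exp[of "\<bar>t * Z \<omega>\<bar>" "2*k"] by simp
      also have "\<dots> \<le> exp (t * Z \<omega>) + exp ((-t) * Z \<omega>)"
        by (cases "t * Z \<omega> \<ge> 0") (auto simp: abs_if add_increasing2 add_increasing)
      finally show ?thesis .
    qed
    have "(\<Sum>\<omega>\<in>\<Omega>. (t * Z \<omega>) ^ (2*k) / fact (2*k)) \<le> (\<Sum>\<omega>\<in>\<Omega>. exp (t * Z \<omega>)) + (\<Sum>\<omega>\<in>\<Omega>. exp ((-t) * Z \<omega>))"
      unfolding sum.distrib[symmetric] by (intro sum_mono each)
    also have "\<dots> \<le> real (card \<Omega>) * exp (t\<^sup>2 * v / 2) + real (card \<Omega>) * exp ((-t)\<^sup>2 * v / 2)"
      by (intro add_mono mgf)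
    also have "\<dots> = 2 * real (card \<Omega>) * exp 1 ^ k"
      using v by (simp add: t2 exp_of_nat_mult[symmetric])
    finally have A: "(\<Sum>\<omega>\<in>\<Omega>. (t * Z \<omega>) ^ (2*k) / fact (2*k)) \<le> 2 * real (card \<Omega>) * exp 1 ^ k" .
    have "(\<Sum>\<omega>\<in>\<Omega>. (t * Z \<omega>) ^ (2*k) / fact (2*k)) = ((2*k/v) ^ k / fact (2*k)) * (\<Sum>\<omega>\<in>\<Omega>. Z \<omega> ^ (2*k))"
    proof -
      have tp: "t ^ (2*k) = (2*k/v)^k" by (simp add: power_mult t2)
      have "(\<Sum>\<omega>\<in>\<Omega>. (t * Z \<omega>) ^ (2*k) / fact (2*k)) = (\<Sum>\<omega>\<in>\<Omega>. ((2*k/v) ^ k / fact (2*k)) * Z \<omega> ^ (2*k))"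
        by (intro sum.cong refl) (simp add: power_mult_distrib tp)
      then show ?thesis by (simp add: sum_distrib_left)
    qed
    with A have B: "((2*k/v) ^ k / fact (2*k)) * (\<Sum>\<omega>\<in>\<Omega>. Z \<omega> ^ (2*k)) \<le> 2 * real (card \<Omega>) * exp 1 ^ k"
      by simp
    have pos: "(2*k/v) ^ k / fact (2*k) > 0" using v k by simp
    have "(\<Sum>\<omega>\<in>\<Omega>. Z \<omega> ^ (2*k)) \<le> 2 * real (card \<Omega>) * exp 1 ^ k / ((2*k/v) ^ k / fact (2*k))"
      using B by (subst pos_le_divide_eq[OF pos]) (simp add: mult.commute)
    also have "\<dots> = 2 * real (card \<Omega>) * exp 1 ^ k * fact (2*k) * (v / (2*k)) ^ k"
      using v k by (simp add: field_simps power_divide)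
    finally show ?thesis .
  qed
  have termb: "(\<Sum>\<omega>\<in>\<Omega>. (a * (Z \<omega>)\<^sup>2) ^ k / fact k) \<le> 2 * real (card \<Omega>) * (1/4) ^ k" for k
  proof (cases "k = 0")
    case True then show ?thesis by simp
  next
    case False
    then have k: "k \<ge> 1" by simp
    have "(\<Sum>\<omega>\<in>\<Omega>. (a * (Z \<omega>)\<^sup>2) ^ k / fact k) = a ^ k / fact k * (\<Sum>\<omega>\<in>\<Omega>. Z \<omega> ^ (2*k))"
      by (simp add: sum_distrib_left power_mult_distrib mult_ac flip: power_mult)
    also have "\<dots> \<le> a ^ k / fact k * (2 * real (card \<Omega>) * exp 1 ^ k * fact (2*k) * (v / (2*k)) ^ k)"
      by (intro mult_left_mono mom k) (use a0 in simp)
    also have "\<dots> = (a ^ k / fact k * (2 * real (card \<Omega>) * exp 1 ^ k)) * (fact (2*k) * (v / (2*k)) ^ k)"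
      by (simp add: mult_ac)
    also have "\<dots> \<le> (a ^ k / fact k * (2 * real (card \<Omega>) * exp 1 ^ k)) * ((fact k * (2 * real k) ^ k) * (v / (2*k)) ^ k)"
      by (intro mult_left_mono mult_right_mono fact_double_le) (use a0 v in simp_all)
    also have "\<dots> = a ^ k / fact k * (2 * real (card \<Omega>) * exp 1 ^ k * (fact k * (2 * real k) ^ k) * (v / (2*k)) ^ k)"
      by (simp add: mult_ac)
    also have "\<dots> = 2 * real (card \<Omega>) * (a * exp 1 * v) ^ k"
      using k v by (simp add: field_simps power_mult_distrib power_divide)
    also have "\<dots> = 2 * real (card \<Omega>) * (1/4) ^ k"
      using v by (simp add: a_def)
    finally show ?thesis .
  qed
  have s1: "(\<lambda>k. \<Sum>\<omega>\<in>\<Omega>. (a * (Z \<omega>)\<^sup>2) ^ k / fact k) sums (\<Sum>\<omega>\<in>\<Omega>. exp (a * (Z \<omega>)\<^sup>2))"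
    by (intro sums_sum exp_sums_div)
  have s2: "(\<lambda>k. 2 * real (card \<Omega>) * (1/4::real) ^ k) sums (2 * real (card \<Omega>) * (1 / (1 - 1/4)))"
    by (intro sums_mult geometric_sums) simp
  have "(\<Sum>\<omega>\<in>\<Omega>. exp (a * (Z \<omega>)\<^sup>2)) \<le> 2 * real (card \<Omega>) * (1 / (1 - 1/4))"
    by (rule sums_le[OF termb s1 s2])
  then show ?thesis by (simp add: a_def)
qed


definition avg :: "'a set \<Rightarrow> ('a \<Rightarrow> real) \<Rightarrow> real" where
  "avg \<Omega> f = (\<Sum>\<omega>\<in>\<Omega>. f \<omega>) / real (card \<Omega>)"

definition SEa :: "'a set \<Rightarrow> ('a \<Rightarrow> real) \<Rightarrow> real \<Rightarrow> bool" where
  "SEa \<Omega> X \<sigma> \<longleftrightarrow> (\<forall>t::real. \<sigma> * \<bar>t\<bar> \<le> 1 \<longrightarrow>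
      avg \<Omega> (\<lambda>\<omega>. exp (t * (X \<omega> - avg \<Omega> X))) \<le> exp (t\<^sup>2 * \<sigma>\<^sup>2))"

lemma avg_mono: "finite \<Omega> \<Longrightarrow> (\<And>\<omega>. \<omega> \<in> \<Omega> \<Longrightarrow> f \<omega> \<le> g \<omega>) \<Longrightarrow> avg \<Omega> f \<le> avg \<Omega> g"
  unfolding avg_def by (intro divide_right_mono sum_mono) auto

lemma avg_add: "avg \<Omega> (\<lambda>\<omega>. f \<omega> + g \<omega>) = avg \<Omega> f + avg \<Omega> g"
  unfolding avg_def by (simp add: sum.distrib add_divide_distrib)

lemma avg_diff: "avg \<Omega> (\<lambda>\<omega>. f \<omega> - g \<omega>) = avg \<Omega> f - avg \<Omega> g"
  unfolding avg_def by (simp add: sum_subtractf diff_divide_distrib)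

lemma avg_cmult: "avg \<Omega> (\<lambda>\<omega>. c * f \<omega>) = c * avg \<Omega> f"
  unfolding avg_def by (simp add: sum_distrib_left)

lemma avg_const: "finite \<Omega> \<Longrightarrow> \<Omega> \<noteq> {} \<Longrightarrow> avg \<Omega> (\<lambda>\<omega>. c) = c"
  unfolding avg_def by simp

lemma avg_centered: "finite \<Omega> \<Longrightarrow> \<Omega> \<noteq> {} \<Longrightarrow> avg \<Omega> (\<lambda>\<omega>. X \<omega> - avg \<Omega> X) = 0"
  by (simp add: avg_diff avg_const)

lemma taylor2: "exp (x::real) \<le> 1 + x + x\<^sup>2 / 2 * exp \<bar>x\<bar>"
proof -
  obtain t where t: "\<bar>t\<bar> \<le> \<bar>x\<bar>" "exp x = (\<Sum>m<2. x ^ m / fact m) + exp t / fact 2 * x ^ 2"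
    using Maclaurin_exp_le[of x 2] by blast
  have "exp t \<le> exp \<bar>x\<bar>" using t(1) by simp
  then have "exp t / 2 * x\<^sup>2 \<le> exp \<bar>x\<bar> / 2 * x\<^sup>2" by (intro mult_right_mono) auto
  then show ?thesis using t(2) by (simp add: numeral_2_eq_2 mult_ac)
qed

lemma taylor2_small: "\<bar>x::real\<bar> \<le> 1 \<Longrightarrow> exp x \<le> 1 + x + 3/2 * x\<^sup>2"
proof -
  assume "\<bar>x\<bar> \<le> 1"
  then have "exp \<bar>x\<bar> \<le> exp 1" by simp
  also have "\<dots> \<le> 3" using exp_le by simp
  finally have "x\<^sup>2 / 2 * exp \<bar>x\<bar> \<le> x\<^sup>2 / 2 * 3" by (intro mult_left_mono) auto
  then show ?thesis using taylor2[of x] by simp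
qed

lemma SEa_mono: "SEa \<Omega> X \<sigma> \<Longrightarrow> 0 \<le> \<sigma> \<Longrightarrow> \<sigma> \<le> \<sigma>' \<Longrightarrow> SEa \<Omega> X \<sigma>'"
  unfolding SEa_def
proof (intro allI impI)
  fix t assume H: "\<forall>t. \<sigma> * \<bar>t\<bar> \<le> 1 \<longrightarrow> avg \<Omega> (\<lambda>\<omega>. exp (t * (X \<omega> - avg \<Omega> X))) \<le> exp (t\<^sup>2 * \<sigma>\<^sup>2)"
    and s: "0 \<le> \<sigma>" "\<sigma> \<le> \<sigma>'" and t: "\<sigma>' * \<bar>t\<bar> \<le> 1"
  have "\<sigma> * \<bar>t\<bar> \<le> \<sigma>' * \<bar>t\<bar>" using s by (intro mult_right_mono) auto
  then have "avg \<Omega> (\<lambda>\<omega>. exp (t * (X \<omega> - avg \<Omega> X))) \<le> exp (t\<^sup>2 * \<sigma>\<^sup>2)" using H t by auto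
  also have "\<dots> \<le> exp (t\<^sup>2 * \<sigma>'\<^sup>2)" using s by (auto intro!: mult_left_mono power_mono)
  finally show "avg \<Omega> (\<lambda>\<omega>. exp (t * (X \<omega> - avg \<Omega> X))) \<le> exp (t\<^sup>2 * \<sigma>'\<^sup>2)" .
qed

lemma SEa_scale:
  assumes "SEa \<Omega> X \<sigma>" "c \<ge> 0"
  shows "SEa \<Omega> (\<lambda>\<omega>. c * X \<omega>) (c * \<sigma>)"
  unfolding SEa_def
proof (intro allI impI)
  fix t assume t: "c * \<sigma> * \<bar>t\<bar> \<le> 1"
  have "\<sigma> * \<bar>t * c\<bar> \<le> 1" using t assms(2) by (simp add: abs_mult mult_ac)
  then have "avg \<Omega> (\<lambda>\<omega>. exp ((t * c) * (X \<omega> - avg \<Omega> X))) \<le> exp ((t * c)\<^sup>2 * \<sigma>\<^sup>2)"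
    using assms(1) unfolding SEa_def by blast
  moreover have "(\<lambda>\<omega>. exp (t * (c * X \<omega> - avg \<Omega> (\<lambda>\<omega>. c * X \<omega>)))) = (\<lambda>\<omega>. exp ((t * c) * (X \<omega> - avg \<Omega> X)))"
    by (simp add: avg_cmult algebra_simps)
  ultimately show "avg \<Omega> (\<lambda>\<omega>. exp (t * (c * X \<omega> - avg \<Omega> (\<lambda>\<omega>. c * X \<omega>)))) \<le> exp (t\<^sup>2 * (c * \<sigma>)\<^sup>2)"
    by (simp add: power_mult_distrib mult_ac)
qed

lemma SEa_diff:
  assumes fin: "finite \<Omega>" and X: "SEa \<Omega> X a" and Y: "SEa \<Omega> Y b" and a: "a \<ge> 0" and b: "b \<ge> 0"
  shows "SEa \<Omega> (\<lambda>\<omega>. X \<omega> - Y \<omega>) (2 * max a b)"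
  unfolding SEa_def
proof (intro allI impI)
  fix t assume t: "2 * max a b * \<bar>t\<bar> \<le> 1"
  have "a * \<bar>t\<bar> \<le> max a b * \<bar>t\<bar>" "b * \<bar>t\<bar> \<le> max a b * \<bar>t\<bar>"
    by (auto intro!: mult_right_mono)
  then have ta: "a * \<bar>2*t\<bar> \<le> 1" and tb: "b * \<bar>-2*t\<bar> \<le> 1" using t
    by (auto simp: abs_mult)
  define X' where "X' \<omega> = X \<omega> - avg \<Omega> X" for \<omega>
  define Y' where "Y' \<omega> = Y \<omega> - avg \<Omega> Y" for \<omega>
  have eX: "avg \<Omega> (\<lambda>\<omega>. exp ((2*t) * X' \<omega>)) \<le> exp ((2*t)\<^sup>2 * a\<^sup>2)"
    using X ta unfolding SEa_def X'_def by blast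
  have eY: "avg \<Omega> (\<lambda>\<omega>. exp ((-2*t) * Y' \<omega>)) \<le> exp ((-2*t)\<^sup>2 * b\<^sup>2)"
    using Y tb unfolding SEa_def Y'_def by blast
  have pt: "exp (t * (X \<omega> - Y \<omega> - avg \<Omega> (\<lambda>\<omega>. X \<omega> - Y \<omega>))) \<le> (exp ((2*t) * X' \<omega>) + exp ((-2*t) * Y' \<omega>)) / 2" for \<omega>
  proof -
    have "exp (t * (X \<omega> - Y \<omega> - avg \<Omega> (\<lambda>\<omega>. X \<omega> - Y \<omega>))) = exp (t * X' \<omega>) * exp (-t * Y' \<omega>)"
      unfolding mult_exp_exp X'_def Y'_def avg_diff by (rule arg_cong[where f=exp]) (simp add: algebra_simps)
    also have "\<dots> \<le> ((exp (t * X' \<omega>))\<^sup>2 + (exp (-t * Y' \<omega>))\<^sup>2) / 2"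
      using sum_squares_bound[of "exp (t * X' \<omega>)" "exp (-t * Y' \<omega>)"] by simp
    also have "\<dots> = (exp ((2*t) * X' \<omega>) + exp ((-2*t) * Y' \<omega>)) / 2"
    proof -
      have "(exp (t * X' \<omega>))\<^sup>2 = exp ((2*t) * X' \<omega>)"
        using exp_double[of "t * X' \<omega>"] by (simp add: mult.assoc)
      moreover have "(exp (- t * Y' \<omega>))\<^sup>2 = exp ((-2*t) * Y' \<omega>)"
        using exp_double[of "- t * Y' \<omega>"] by (simp add: mult.assoc)
      ultimately show ?thesis by simp
    qed
    finally show ?thesis .
  qed
  have "avg \<Omega> (\<lambda>\<omega>. exp (t * (X \<omega> - Y \<omega> - avg \<Omega> (\<lambda>\<omega>. X \<omega> - Y \<omega>))))
      \<le> avg \<Omega> (\<lambda>\<omega>. (exp ((2*t) * X' \<omega>) + exp ((-2*t) * Y' \<omega>)) / 2)"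
    by (intro avg_mono fin pt)
  also have "\<dots> = (avg \<Omega> (\<lambda>\<omega>. exp ((2*t) * X' \<omega>)) + avg \<Omega> (\<lambda>\<omega>. exp ((-2*t) * Y' \<omega>))) / 2"
    unfolding avg_def by (simp add: sum.distrib add_divide_distrib sum_divide_distrib mult.commute)
  also have "\<dots> \<le> (exp ((2*t)\<^sup>2 * a\<^sup>2) + exp ((-2*t)\<^sup>2 * b\<^sup>2)) / 2"
    using eX eY by simp
  also have "\<dots> \<le> (exp (t\<^sup>2 * (2 * max a b)\<^sup>2) + exp (t\<^sup>2 * (2 * max a b)\<^sup>2)) / 2"
  proof -
    have "a\<^sup>2 \<le> (max a b)\<^sup>2" "b\<^sup>2 \<le> (max a b)\<^sup>2" using a b by (auto intro!: power_mono)
    then have "(2*t)\<^sup>2 * a\<^sup>2 \<le> t\<^sup>2 * (2 * max a b)\<^sup>2" "(-2*t)\<^sup>2 * b\<^sup>2 \<le> t\<^sup>2 * (2 * max a b)\<^sup>2"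
      by (auto simp: power_mult_distrib intro!: mult_left_mono)
    then show ?thesis by (intro divide_right_mono add_mono) auto
  qed
  finally show "avg \<Omega> (\<lambda>\<omega>. exp (t * (X \<omega> - Y \<omega> - avg \<Omega> (\<lambda>\<omega>. X \<omega> - Y \<omega>)))) \<le> exp (t\<^sup>2 * (2 * max a b)\<^sup>2)"
    by simp
qed

lemma SEa_bounded:
  assumes fin: "finite \<Omega>" and ne: "\<Omega> \<noteq> {}" and r: "r > 0"
    and bnd: "\<And>\<omega>. \<omega> \<in> \<Omega> \<Longrightarrow> 0 \<le> X \<omega> \<and> X \<omega> \<le> r"
  shows "SEa \<Omega> X (2 * r)"
  unfolding SEa_def
proof (intro allI impI)
  fix t assume t: "2 * r * \<bar>t\<bar> \<le> 1"
  define m where "m = avg \<Omega> X"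
  have m0: "0 \<le> m" unfolding m_def avg_def using bnd by (intro divide_nonneg_nonneg sum_nonneg) auto
  have mr: "m \<le> r"
  proof -
    have "m \<le> avg \<Omega> (\<lambda>_. r)" unfolding m_def using bnd by (intro avg_mono fin) auto
    then show ?thesis using avg_const[OF fin ne] by simp
  qed
  have pt: "exp (t * (X \<omega> - m)) \<le> 1 + t * (X \<omega> - m) + 3/2 * (t\<^sup>2 * r\<^sup>2)" if w: "\<omega> \<in> \<Omega>" for \<omega>
  proof -
    have d: "\<bar>X \<omega> - m\<bar> \<le> r" using bnd[OF w] m0 mr by auto
    have "\<bar>t * (X \<omega> - m)\<bar> \<le> \<bar>t\<bar> * r" using d by (simp add: abs_mult mult_left_mono)
    also have "\<dots> \<le> 1" using t r by (simp add: mult_ac)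
    finally have s: "\<bar>t * (X \<omega> - m)\<bar> \<le> 1" .
    have "(t * (X \<omega> - m))\<^sup>2 \<le> (t * r)\<^sup>2"
      using d by (simp add: power_mult_distrib abs_le_square_iff[symmetric] abs_mult mult_left_mono)
    then show ?thesis using taylor2_small[OF s] by (simp add: power_mult_distrib)
  qed
  have "avg \<Omega> (\<lambda>\<omega>. exp (t * (X \<omega> - m))) \<le> avg \<Omega> (\<lambda>\<omega>. 1 + t * (X \<omega> - m) + 3/2 * (t\<^sup>2 * r\<^sup>2))"
    by (intro avg_mono fin pt)
  also have "\<dots> = 1 + 3/2 * (t\<^sup>2 * r\<^sup>2)"
    using avg_centered[OF fin ne, of X] fin ne
    by (simp add: avg_add avg_cmult avg_const m_def)
  also have "\<dots> \<le> exp (3/2 * (t\<^sup>2 * r\<^sup>2))" by (rule exp_ge_add_one_self[THEN order.trans[rotated]]) simp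
  also have "\<dots> \<le> exp (t\<^sup>2 * (2 * r)\<^sup>2)" by (simp add: power_mult_distrib)
  finally show "avg \<Omega> (\<lambda>\<omega>. exp (t * (X \<omega> - avg \<Omega> X))) \<le> exp (t\<^sup>2 * (2 * r)\<^sup>2)"
    by (simp add: m_def)
qed


lemma SEa_from_exp_moment:
  assumes fin: "finite \<Omega>" and ne: "\<Omega> \<noteq> {}" and l0: "lam > 0" and K: "K \<ge> 1"
    and W0: "\<And>\<omega>. \<omega> \<in> \<Omega> \<Longrightarrow> W \<omega> \<ge> 0"
    and mom: "avg \<Omega> (\<lambda>\<omega>. exp (lam * W \<omega>)) \<le> K"
  shows "SEa \<Omega> W (4 * K / lam)"
  unfolding SEa_def
proof (intro allI impI)
  fix t assume t: "4 * K / lam * \<bar>t\<bar> \<le> 1"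
  define m where "m = avg \<Omega> W"
  have m0: "m \<ge> 0" unfolding m_def avg_def using W0 by (intro divide_nonneg_nonneg sum_nonneg) auto
  have jensen: "exp (lam * m) \<le> K"
  proof -
    have "exp (lam * m) * (1 + (lam * W \<omega> - lam * m)) \<le> exp (lam * W \<omega>)" for \<omega>
    proof -
      have "1 + (lam * W \<omega> - lam * m) \<le> exp (lam * W \<omega> - lam * m)" by (rule exp_ge_add_one_self)
      then have "exp (lam * m) * (1 + (lam * W \<omega> - lam * m)) \<le> exp (lam * m) * exp (lam * W \<omega> - lam * m)"
        by (intro mult_left_mono) auto
      then show ?thesis by (simp add: mult_exp_exp)
    qed
    then have "avg \<Omega> (\<lambda>\<omega>. exp (lam * m) * (1 + (lam * W \<omega> - lam * m))) \<le> avg \<Omega> (\<lambda>\<omega>. exp (lam * W \<omega>))"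
      by (intro avg_mono fin)
    moreover have "avg \<Omega> (\<lambda>\<omega>. exp (lam * m) * (1 + (lam * W \<omega> - lam * m))) = exp (lam * m)"
    proof -
      have "avg \<Omega> (\<lambda>\<omega>. 1 + (lam * W \<omega> - lam * m)) = 1"
        using fin ne by (simp add: avg_add avg_diff avg_cmult avg_const m_def)
      then show ?thesis by (simp add: avg_cmult)
    qed
    ultimately show ?thesis using mom by simp
  qed
  have tl: "\<bar>t\<bar> \<le> lam / 4"
  proof -
    have "4 * K * \<bar>t\<bar> \<le> lam" using t l0 by (simp add: field_simps)
    moreover have "4 * \<bar>t\<bar> \<le> 4 * K * \<bar>t\<bar>" using K by (simp add: mult_right_mono)
    ultimately show ?thesis by simp
  qed
  have pt: "exp (t * (W \<omega> - m)) \<le> 1 + t * (W \<omega> - m) + (4 * t\<^sup>2 * K / lam\<^sup>2) * exp (lam * W \<omega>)"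
    if w: "\<omega> \<in> \<Omega>" for \<omega>
  proof -
    define y where "y = W \<omega> + m"
    have y0: "y \<ge> 0" using W0[OF w] m0 by (simp add: y_def)
    have dy: "\<bar>W \<omega> - m\<bar> \<le> y" using W0[OF w] m0 by (simp add: y_def)
    have ex: "exp \<bar>t * (W \<omega> - m)\<bar> \<le> exp (lam / 4 * y)"
    proof -
      have "\<bar>t * (W \<omega> - m)\<bar> \<le> lam / 4 * y"
        unfolding abs_mult by (intro mult_mono tl dy) (use l0 in auto)
      then show ?thesis by simp
    qed
    have sq: "(t * (W \<omega> - m))\<^sup>2 \<le> t\<^sup>2 * y\<^sup>2"
      unfolding power_mult_distrib using dy by (intro mult_left_mono) (auto simp: abs_le_square_iff[symmetric])
    have yexp: "y\<^sup>2 \<le> 8 / lam\<^sup>2 * exp (lam / 2 * y)"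
    proof -
      have "(lam / 2 * y) ^ 2 / fact 2 \<le> exp (lam / 2 * y)" by (rule pow_fact_le_exp) (use l0 y0 in simp)
      then have "lam\<^sup>2 * y\<^sup>2 / 8 \<le> exp (lam / 2 * y)" by (simp add: power_mult_distrib power_divide)
      then show ?thesis using l0 by (simp add: field_simps)
    qed
    have "exp (t * (W \<omega> - m)) \<le> 1 + t * (W \<omega> - m) + (t * (W \<omega> - m))\<^sup>2 / 2 * exp \<bar>t * (W \<omega> - m)\<bar>"
      by (rule taylor2)
    also have "(t * (W \<omega> - m))\<^sup>2 / 2 * exp \<bar>t * (W \<omega> - m)\<bar> \<le> t\<^sup>2 * y\<^sup>2 / 2 * exp (lam / 4 * y)"
      by (intro mult_mono divide_right_mono sq ex) auto
    also have "\<dots> \<le> t\<^sup>2 * (8 / lam\<^sup>2 * exp (lam / 2 * y)) / 2 * exp (lam / 4 * y)"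
      by (intro mult_right_mono divide_right_mono mult_left_mono yexp) auto
    also have "\<dots> = (4 * t\<^sup>2 / lam\<^sup>2) * exp (3 * lam / 4 * y)"
      by (simp add: mult_exp_exp field_simps)
    also have "\<dots> \<le> (4 * t\<^sup>2 / lam\<^sup>2) * exp (lam * y)"
      using l0 y0 by (intro mult_left_mono) auto
    also have "exp (lam * y) = exp (lam * m) * exp (lam * W \<omega>)"
      by (simp add: y_def mult_exp_exp algebra_simps)
    also have "(4 * t\<^sup>2 / lam\<^sup>2) * (exp (lam * m) * exp (lam * W \<omega>)) \<le> (4 * t\<^sup>2 / lam\<^sup>2) * (K * exp (lam * W \<omega>))"
      using jensen by (intro mult_left_mono mult_right_mono) auto
    finally show ?thesis by (simp add: mult_ac)
  qed
  have "avg \<Omega> (\<lambda>\<omega>. exp (t * (W \<omega> - m))) \<le> avg \<Omega> (\<lambda>\<omega>. 1 + t * (W \<omega> - m) + (4 * t\<^sup>2 * K / lam\<^sup>2) * exp (lam * W \<omega>))"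
    by (intro avg_mono fin pt)
  also have "\<dots> = avg \<Omega> (\<lambda>\<omega>. 1 + t * (W \<omega> - m)) + (4 * t\<^sup>2 * K / lam\<^sup>2) * avg \<Omega> (\<lambda>\<omega>. exp (lam * W \<omega>))"
    by (simp only: avg_add avg_cmult)
  also have "avg \<Omega> (\<lambda>\<omega>. 1 + t * (W \<omega> - m)) = 1"
    using avg_centered[OF fin ne, of W] fin ne
    by (simp add: avg_add avg_cmult avg_const m_def)
  also have "1 + (4 * t\<^sup>2 * K / lam\<^sup>2) * avg \<Omega> (\<lambda>\<omega>. exp (lam * W \<omega>)) \<le> 1 + (4 * t\<^sup>2 * K / lam\<^sup>2) * K"
    using mom l0 K by (intro add_left_mono mult_left_mono) auto
  also have "\<dots> \<le> exp ((4 * t\<^sup>2 * K / lam\<^sup>2) * K)" by (rule exp_ge_add_one_self[THEN order.trans[rotated]]) simp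
  also have "\<dots> \<le> exp (t\<^sup>2 * (4 * K / lam)\<^sup>2)"
  proof -
    have "(4 * t\<^sup>2 * K / lam\<^sup>2) * K \<le> 16 * t\<^sup>2 * K\<^sup>2 / lam\<^sup>2"
      using K l0 by (simp add: field_simps power2_eq_square)
    then show ?thesis by (simp add: power_mult_distrib power_divide mult_ac)
  qed
  finally show "avg \<Omega> (\<lambda>\<omega>. exp (t * (W \<omega> - avg \<Omega> W))) \<le> exp (t\<^sup>2 * (4 * K / lam)\<^sup>2)"
    by (simp add: m_def)
qed


definition Tsum :: "nat \<Rightarrow> (nat \<Rightarrow> nat) \<Rightarrow> nat list \<Rightarrow> real" where
  "Tsum n1 p l = (\<Sum>i<n1. (sv n1 p l i)\<^sup>2)"

definition Yv :: "nat \<Rightarrow> (nat \<Rightarrow> nat) \<Rightarrow> nat list \<Rightarrow> real" where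
  "Yv n1 p l = ((Ssum n1 p l)\<^sup>2 - Tsum n1 p l) / (real n1 * (real n1 - 1))"

lemma perm_tuples_finite: "finite (perm_tuples n1 n2)"
  unfolding perm_tuples_eq by (intro finite_cartesian_product finite_permutations finite_Lists) simp

lemma perm_tuples_ne: "n1 \<le> n2 \<Longrightarrow> perm_tuples n1 n2 \<noteq> {}"
proof -
  assume "n1 \<le> n2"
  then have "(id, [0..<n1]) \<in> perm_tuples n1 n2"
    by (auto simp: perm_tuples_eq Lists_def permutes_id)
  then show ?thesis by blast
qed

lemma sv_sq_le: "(sv n1 p l i)\<^sup>2 \<le> 1"
  unfolding sv_def by (auto simp: of_bool_def)

definition C3 :: real where "C3 = 4 * (4 * (8/3) / (1 / (4 * exp 1)))"

lemma C3_pos: "C3 > 0" by (simp add: C3_def)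

lemma part3:
  assumes n1: "2 \<le> n1" and n12: "n1 \<le> n2"
  shows "SEa (perm_tuples n1 n2) (\<lambda>\<omega>. Yv n1 (fst \<omega>) (snd \<omega>)) (C3 / real n1)"
proof -
  define \<Omega> where "\<Omega> = perm_tuples n1 n2"
  have fin: "finite \<Omega>" unfolding \<Omega>_def by (rule perm_tuples_finite)
  have ne: "\<Omega> \<noteq> {}" unfolding \<Omega>_def using n12 by (rule perm_tuples_ne)
  have cpos: "real (card \<Omega>) > 0" using fin ne by (simp add: card_gt_0_iff)
  define Z where "Z \<omega> = Ssum n1 (fst \<omega>) (snd \<omega>)" for \<omega>
  define lam :: real where "lam = 1 / (4 * exp 1)"
  define W where "W \<omega> = (Z \<omega>)\<^sup>2 / real n1" for \<omega>
  have v: "real n1 > 0" using n1 by simp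
  have mgf: "(\<Sum>\<omega>\<in>\<Omega>. exp (t * Z \<omega>)) \<le> real (card \<Omega>) * exp (t\<^sup>2 * real n1 / 2)" for t
    using S_mgf[of n1 t n2] n1 unfolding \<Omega>_def Z_def by (simp add: mult_ac)
  have "(\<Sum>\<omega>\<in>\<Omega>. exp ((Z \<omega>)\<^sup>2 / (4 * exp 1 * real n1))) \<le> real (card \<Omega>) * (8/3)"
    by (rule sq_mgf[OF fin v mgf])
  then have momW: "avg \<Omega> (\<lambda>\<omega>. exp (lam * W \<omega>)) \<le> 8/3"
    unfolding avg_def lam_def W_def using cpos by (simp add: field_simps)
  have SW: "SEa \<Omega> W (4 * (8/3) / lam)"
    by (rule SEa_from_exp_moment[OF fin ne _ _ _ momW]) (auto simp: lam_def W_def)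
  define \<sigma>0 where "\<sigma>0 = 4 * (8/3) / lam"
  have s0: "\<sigma>0 \<ge> 2"
  proof -
    have "exp 1 \<ge> (1::real)" by simp
    then have "3 \<le> 64 * exp (1::real)" by linarith
    then show ?thesis by (simp add: \<sigma>0_def lam_def)
  qed
  have SY1: "SEa \<Omega> (\<lambda>\<omega>. (1 / (real n1 - 1)) * W \<omega>) ((1 / (real n1 - 1)) * \<sigma>0)"
    using SEa_scale[OF SW, of "1 / (real n1 - 1)"] n1 unfolding \<sigma>0_def by simp
  define Y2 where "Y2 \<omega> = Tsum n1 (fst \<omega>) (snd \<omega>) / (real n1 * (real n1 - 1))" for \<omega>
  have SY2: "SEa \<Omega> Y2 (2 * (1 / (real n1 - 1)))"
  proof (rule SEa_bounded[OF fin ne])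
    show "1 / (real n1 - 1) > 0" using n1 by simp
    fix \<omega>
    have T0: "0 \<le> Tsum n1 (fst \<omega>) (snd \<omega>)" unfolding Tsum_def by (intro sum_nonneg) simp
    have T1: "Tsum n1 (fst \<omega>) (snd \<omega>) \<le> real n1"
    proof -
      have "Tsum n1 (fst \<omega>) (snd \<omega>) \<le> (\<Sum>i<n1. 1)" unfolding Tsum_def by (intro sum_mono sv_sq_le)
      then show ?thesis by simp
    qed
    have d: "real n1 * (real n1 - 1) > 0" using n1 by simp
    have "Y2 \<omega> \<le> real n1 / (real n1 * (real n1 - 1))"
      unfolding Y2_def using T1 d by (intro divide_right_mono) auto
    also have "\<dots> = 1 / (real n1 - 1)" using n1 by simp
    finally show "0 \<le> Y2 \<omega> \<and> Y2 \<omega> \<le> 1 / (real n1 - 1)"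
      unfolding Y2_def using T0 d by simp
  qed
  have eqY: "(\<lambda>\<omega>. Yv n1 (fst \<omega>) (snd \<omega>)) = (\<lambda>\<omega>. (1 / (real n1 - 1)) * W \<omega> - Y2 \<omega>)"
  proof
    fix \<omega>
    show "Yv n1 (fst \<omega>) (snd \<omega>) = (1 / (real n1 - 1)) * W \<omega> - Y2 \<omega>"
      unfolding Yv_def W_def Y2_def Z_def diff_divide_distrib by (simp add: mult.commute)
  qed
  have a0: "(1 / (real n1 - 1)) * \<sigma>0 \<ge> 0" using n1 s0 by simp
  have A: "SEa \<Omega> (\<lambda>\<omega>. Yv n1 (fst \<omega>) (snd \<omega>)) (2 * max ((1 / (real n1 - 1)) * \<sigma>0) (2 * (1 / (real n1 - 1))))"
    unfolding eqY by (rule SEa_diff[OF fin SY1 SY2 a0]) (use n1 in simp)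
  have B: "2 * max ((1 / (real n1 - 1)) * \<sigma>0) (2 * (1 / (real n1 - 1))) \<le> C3 / real n1"
  proof -
    have "max ((1 / (real n1 - 1)) * \<sigma>0) (2 * (1 / (real n1 - 1))) = \<sigma>0 / (real n1 - 1)"
    proof -
      have "2 / (real n1 - 1) \<le> \<sigma>0 / (real n1 - 1)" using s0 n1 by (intro divide_right_mono) auto
      then show ?thesis by (simp add: max_absorb1)
    qed
    moreover have "2 * (\<sigma>0 / (real n1 - 1)) \<le> 4 * \<sigma>0 / real n1"
      using s0 n1 by (simp add: field_simps)
    ultimately show ?thesis by (simp add: C3_def \<sigma>0_def lam_def)
  qed
  have C: "0 \<le> 2 * max ((1 / (real n1 - 1)) * \<sigma>0) (2 * (1 / (real n1 - 1)))"
    using a0 by simp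
  show ?thesis using SEa_mono[OF A C B] unfolding \<Omega>_def .
qed


locale twosample =
  fixes d n1 n2 :: nat and P Q :: "(nat \<Rightarrow> real) measure"
  assumes P: "prob_space P" and Q: "prob_space Q"
    and sP: "sets P = sets borel" and sQ: "sets Q = sets borel"
    and iP: "\<And>k. k < d \<Longrightarrow> integrable P (\<lambda>x. x k)"
    and iQ: "\<And>k. k < d \<Longrightarrow> integrable Q (\<lambda>x. x k)"
    and n12: "n1 \<le> n2"
begin

definition Mi :: "nat \<Rightarrow> (nat \<Rightarrow> real) measure" where
  "Mi m = (if m < n1 then P else Q)"

abbreviation "data \<equiv> data_law n1 n2 P Q"

lemma data_eq: "data = PiM {..<n1+n2} Mi"
  unfolding data_law_def Mi_def by simp

lemma prob_Mi: "prob_space (Mi m)" by (simp add: Mi_def P Q)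

sublocale PS: product_sigma_finite Mi
  unfolding product_sigma_finite_def using prob_Mi prob_space_imp_sigma_finite by blast

lemma prob_data: "prob_space data"
  unfolding data_eq by (rule prob_space_PiM) (rule prob_Mi)

lemma iMi: "k < d \<Longrightarrow> integrable (Mi m) (\<lambda>x. x k)"
  by (simp add: Mi_def iP iQ)

lemma iconst: "integrable (Mi m) (\<lambda>_. c::real)"
  using finite_measure.integrable_const[OF prob_space.finite_measure[OF prob_Mi]] by blast

lemma sMi: "sets (Mi m) = sets borel"
  by (simp add: Mi_def sP sQ)

lemma coord1:
  assumes u: "u < n1 + n2" and k: "k < d"
  shows "integrable data (\<lambda>x. x u k)" "(\<integral>x. x u k \<partial>data) = mean_vec (Mi u) k"
proof -
  define f where "f i = (if i = u then (\<lambda>z::nat\<Rightarrow>real. z k) else (\<lambda>_. 1))" for i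
  have fi: "integrable (Mi i) (f i)" if "i \<in> {..<n1+n2}" for i
    using iMi[OF k] iconst by (simp add: f_def)
  have eq: "(\<Prod>i\<in>{..<n1+n2}. f i (x i)) = x u k" for x
  proof -
    have "(\<Prod>i\<in>{..<n1+n2}. f i (x i)) = (\<Prod>i\<in>{..<n1+n2}. if i = u then x i k else 1)"
      by (intro prod.cong refl) (simp add: f_def)
    also have "\<dots> = x u k" using u by (simp add: prod.delta)
    finally show ?thesis .
  qed
  show "integrable data (\<lambda>x. x u k)"
    using PS.product_integrable_prod[of "{..<n1+n2}" f, OF _ fi] unfolding data_eq eq by simp
  have "(\<integral>x. x u k \<partial>data) = (\<Prod>i\<in>{..<n1+n2}. integral\<^sup>L (Mi i) (f i))"
    using PS.product_integral_prod[of "{..<n1+n2}" f, OF _ fi] unfolding data_eq eq by simp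
  also have "\<dots> = (\<Prod>i\<in>{..<n1+n2}. if i = u then integral\<^sup>L (Mi i) (\<lambda>z. z k) else 1)"
    by (intro prod.cong refl) (simp add: f_def prob_space.prob_space[OF prob_Mi])
  also have "\<dots> = mean_vec (Mi u) k" using u by (simp add: prod.delta mean_vec_def)
  finally show "(\<integral>x. x u k \<partial>data) = mean_vec (Mi u) k" .
qed

lemma coord2:
  assumes u: "u < n1 + n2" and v: "v < n1 + n2" and uv: "u \<noteq> v" and k: "k < d"
  shows "integrable data (\<lambda>x. x u k * x v k)"
        "(\<integral>x. x u k * x v k \<partial>data) = mean_vec (Mi u) k * mean_vec (Mi v) k"
proof -
  define f where "f i = (if i = u then (\<lambda>z::nat\<Rightarrow>real. z k) else if i = v then (\<lambda>z::nat\<Rightarrow>real. z k) else (\<lambda>_. 1))" for i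
  have fi: "integrable (Mi i) (f i)" if "i \<in> {..<n1+n2}" for i
    using iMi[OF k] iconst by (simp add: f_def)
  have gen: "(\<Prod>i\<in>{..<n1+n2}. g i) = g u * g v" if "\<And>i. i \<noteq> u \<Longrightarrow> i \<noteq> v \<Longrightarrow> g i = 1" for g :: "nat \<Rightarrow> real"
  proof -
    have "(\<Prod>i\<in>{..<n1+n2}. g i) = g u * (\<Prod>i\<in>{..<n1+n2} - {u}. g i)"
      using u by (simp add: prod.remove)
    also have "(\<Prod>i\<in>{..<n1+n2} - {u}. g i) = g v * (\<Prod>i\<in>{..<n1+n2} - {u} - {v}. g i)"
      using v uv by (subst prod.remove[of _ v]) auto
    also have "(\<Prod>i\<in>{..<n1+n2} - {u} - {v}. g i) = 1"
      using that by (intro prod.neutral) auto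
    finally show ?thesis by simp
  qed
  have eq: "(\<Prod>i\<in>{..<n1+n2}. f i (x i)) = x u k * x v k" for x
    using gen[of "\<lambda>i. f i (x i)"] uv by (simp add: f_def)
  show "integrable data (\<lambda>x. x u k * x v k)"
    using PS.product_integrable_prod[of "{..<n1+n2}" f, OF _ fi] unfolding data_eq eq by simp
  have "(\<integral>x. x u k * x v k \<partial>data) = (\<Prod>i\<in>{..<n1+n2}. integral\<^sup>L (Mi i) (f i))"
    using PS.product_integral_prod[of "{..<n1+n2}" f, OF _ fi] unfolding data_eq eq by simp
  also have "\<dots> = integral\<^sup>L (Mi u) (f u) * integral\<^sup>L (Mi v) (f v)"
    by (rule gen) (simp add: f_def prob_space.prob_space[OF prob_Mi])
  also have "\<dots> = mean_vec (Mi u) k * mean_vec (Mi v) k" using uv by (simp add: f_def mean_vec_def)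
  finally show "(\<integral>x. x u k * x v k \<partial>data) = mean_vec (Mi u) k * mean_vec (Mi v) k" .
qed

end

context twosample
begin

abbreviation "\<mu> m \<equiv> mean_vec (Mi m)"

lemma cross:
  assumes "a < n1 + n2" "b < n1 + n2" "c < n1 + n2" "e < n1 + n2"
    and "a \<noteq> c" "a \<noteq> e" "b \<noteq> c" "b \<noteq> e" and k: "k < d"
  shows "integrable data (\<lambda>x. (x a k - x b k) * (x c k - x e k))"
        "(\<integral>x. (x a k - x b k) * (x c k - x e k) \<partial>data) = (\<mu> a k - \<mu> b k) * (\<mu> c k - \<mu> e k)"
proof -
  have eq: "(\<lambda>x::nat \<Rightarrow> nat \<Rightarrow> real. (x a k - x b k) * (x c k - x e k)) = (\<lambda>x. ((x a k * x c k - x a k * x e k) - x b k * x c k) + x b k * x e k)"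
    by (rule ext) (simp add: left_diff_distrib right_diff_distrib)
  note i1 = coord2[OF assms(1) assms(3) assms(5) k]
  note i2 = coord2[OF assms(1) assms(4) assms(6) k]
  note i3 = coord2[OF assms(2) assms(3) assms(7) k]
  note i4 = coord2[OF assms(2) assms(4) assms(8) k]
  show "integrable data (\<lambda>x. (x a k - x b k) * (x c k - x e k))"
    unfolding eq using i1(1) i2(1) i3(1) i4(1) by (intro Bochner_Integration.integrable_add Bochner_Integration.integrable_diff)
  show "(\<integral>x. (x a k - x b k) * (x c k - x e k) \<partial>data) = (\<mu> a k - \<mu> b k) * (\<mu> c k - \<mu> e k)"
    unfolding eq
    using i1 i2 i3 i4
    by (simp add: Bochner_Integration.integral_add Bochner_Integration.integral_diff
        Bochner_Integration.integrable_diff algebra_simps)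
qed

definition \<delta> :: "nat \<Rightarrow> real" where "\<delta> = mean_vec P - mean_vec Q"

lemma mu_diff: "\<mu> a k - \<mu> b k = (of_bool (a < n1) - of_bool (b < n1)) * \<delta> k"
  by (simp add: Mi_def \<delta>_def)

lemma pair_facts:
  assumes pl: "(p, l) \<in> perm_tuples n1 n2" and i: "i < n1" and j: "j < n1" and ij: "i \<noteq> j"
  shows "p i < n1 + n2" "p (n1 + l ! i) < n1 + n2"
    "p i \<noteq> p j" "p i \<noteq> p (n1 + l ! j)" "p (n1 + l ! i) \<noteq> p j" "p (n1 + l ! i) \<noteq> p (n1 + l ! j)"
proof -
  have perm: "p permutes {..<n1+n2}" and l: "distinct l" "length l = n1" "set l \<subseteq> {..<n2}"
    using pl by (auto simp: perm_tuples_def)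
  have inj: "inj p" using perm permutes_inj by blast
  have li: "l ! i < n2" using l i by (metis lessThan_iff nth_mem subsetD)
  have lj: "l ! j < n2" using l j by (metis lessThan_iff nth_mem subsetD)
  have lij: "l ! i \<noteq> l ! j" using l i j ij by (simp add: nth_eq_iff_index_eq)
  have r: "x < n1 + n2 \<Longrightarrow> p x < n1 + n2" for x
    using permutes_in_image[OF perm] by simp
  show "p i < n1 + n2" "p (n1 + l ! i) < n1 + n2" using r i li by auto
  show "p i \<noteq> p j" "p i \<noteq> p (n1 + l ! j)" "p (n1 + l ! i) \<noteq> p j" "p (n1 + l ! i) \<noteq> p (n1 + l ! j)"
    using inj ij lij i j by (auto dest: injD)
qed

lemma U_expect:
  assumes pl: "(p, l) \<in> perm_tuples n1 n2"
  shows "integrable data (U_stat d n1 p l)"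
        "(\<integral>x. U_stat d n1 p l x \<partial>data) = ipd d \<delta> \<delta> * Yv n1 p l"
proof -
  let ?a = "\<lambda>i. p i" and ?b = "\<lambda>i. p (n1 + l ! i)"
  define c where "c = 1 / (real n1 * (real n1 - 1))"
  have U_eq: "U_stat d n1 p l = (\<lambda>x. c * (\<Sum>i<n1. \<Sum>j\<in>{..<n1} - {i}. \<Sum>k<d.
          (x (?a i) k - x (?b i) k) * (x (?a j) k - x (?b j) k)))"
    by (simp add: U_stat_def ipd_def c_def fun_diff_def fun_eq_iff)
  have int: "integrable data (\<lambda>x. (x (?a i) k - x (?b i) k) * (x (?a j) k - x (?b j) k))"
    and val: "(\<integral>x. (x (?a i) k - x (?b i) k) * (x (?a j) k - x (?b j) k) \<partial>data)
        = sv n1 p l i * sv n1 p l j * (\<delta> k * \<delta> k)"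
    if "i < n1" "j \<in> {..<n1} - {i}" "k < d" for i j k
  proof -
    have j: "j < n1" "i \<noteq> j" using that by auto
    note f = pair_facts[OF pl that(1) j]
    have f': "p j < n1 + n2" "p (n1 + l ! j) < n1 + n2" using pair_facts[OF pl j(1) that(1)] j by auto
    show "integrable data (\<lambda>x. (x (?a i) k - x (?b i) k) * (x (?a j) k - x (?b j) k))"
      by (rule cross(1)) (use f f' that in auto)
    have "(\<integral>x. (x (?a i) k - x (?b i) k) * (x (?a j) k - x (?b j) k) \<partial>data)
        = (\<mu> (?a i) k - \<mu> (?b i) k) * (\<mu> (?a j) k - \<mu> (?b j) k)"
      by (rule cross(2)) (use f f' that in auto)
    also have "\<dots> = sv n1 p l i * sv n1 p l j * (\<delta> k * \<delta> k)"
      unfolding mu_diff sv_def by (simp add: mult_ac)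
    finally show "(\<integral>x. (x (?a i) k - x (?b i) k) * (x (?a j) k - x (?b j) k) \<partial>data)
        = sv n1 p l i * sv n1 p l j * (\<delta> k * \<delta> k)" .
  qed
  show "integrable data (U_stat d n1 p l)"
    unfolding U_eq using int
    by (intro Bochner_Integration.integrable_mult_right Bochner_Integration.integrable_sum) auto
  have "(\<integral>x. U_stat d n1 p l x \<partial>data) = c * (\<Sum>i<n1. \<Sum>j\<in>{..<n1} - {i}. \<Sum>k<d.
          (\<integral>x. (x (?a i) k - x (?b i) k) * (x (?a j) k - x (?b j) k) \<partial>data))"
  proof -
    let ?f = "\<lambda>i j k x. (x (?a i) k - x (?b i) k) * (x (?a j) k - x (?b j) k)"
    have I3: "(\<integral>x. (\<Sum>k<d. ?f i j k x) \<partial>data) = (\<Sum>k<d. \<integral>x. ?f i j k x \<partial>data)"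
      if "i < n1" "j \<in> {..<n1} - {i}" for i j
      by (rule Bochner_Integration.integral_sum) (use int that in auto)
    have I2: "(\<integral>x. (\<Sum>j\<in>{..<n1} - {i}. \<Sum>k<d. ?f i j k x) \<partial>data) = (\<Sum>j\<in>{..<n1} - {i}. \<integral>x. (\<Sum>k<d. ?f i j k x) \<partial>data)"
      if "i < n1" for i
      by (rule Bochner_Integration.integral_sum) (use int that in \<open>auto intro!: Bochner_Integration.integrable_sum\<close>)
    have I1: "(\<integral>x. (\<Sum>i<n1. \<Sum>j\<in>{..<n1} - {i}. \<Sum>k<d. ?f i j k x) \<partial>data) = (\<Sum>i<n1. \<integral>x. (\<Sum>j\<in>{..<n1} - {i}. \<Sum>k<d. ?f i j k x) \<partial>data)"
      by (rule Bochner_Integration.integral_sum) (use int in \<open>auto intro!: Bochner_Integration.integrable_sum\<close>)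
    show ?thesis unfolding U_eq Bochner_Integration.integral_mult_right_zero I1
      using I2 I3 by (intro arg_cong[where f="\<lambda>z. c * z"] sum.cong refl) auto
  qed
  also have "\<dots> = c * (\<Sum>i<n1. \<Sum>j\<in>{..<n1} - {i}. \<Sum>k<d. sv n1 p l i * sv n1 p l j * (\<delta> k * \<delta> k))"
    using val by (intro arg_cong[where f="\<lambda>z. c * z"] sum.cong refl) auto
  also have "\<dots> = ipd d \<delta> \<delta> * (c * (\<Sum>i<n1. \<Sum>j\<in>{..<n1} - {i}. sv n1 p l i * sv n1 p l j))"
    by (simp add: ipd_def sum_distrib_left sum_distrib_right mult_ac)
  also have "(\<Sum>i<n1. \<Sum>j\<in>{..<n1} - {i}. sv n1 p l i * sv n1 p l j) = (Ssum n1 p l)\<^sup>2 - Tsum n1 p l"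
  proof -
    have "(Ssum n1 p l)\<^sup>2 = (\<Sum>i<n1. \<Sum>j<n1. sv n1 p l i * sv n1 p l j)"
      by (simp add: Ssum_def power2_eq_square sum_product)
    also have "\<dots> = (\<Sum>i<n1. (sv n1 p l i)\<^sup>2 + (\<Sum>j\<in>{..<n1} - {i}. sv n1 p l i * sv n1 p l j))"
      by (intro sum.cong refl) (simp add: sum.remove power2_eq_square)
    also have "\<dots> = Tsum n1 p l + (\<Sum>i<n1. \<Sum>j\<in>{..<n1} - {i}. sv n1 p l i * sv n1 p l j)"
      by (simp add: sum.distrib Tsum_def)
    finally show ?thesis by simp
  qed
  finally show "(\<integral>x. U_stat d n1 p l x \<partial>data) = ipd d \<delta> \<delta> * Yv n1 p l"
    by (simp add: Yv_def c_def)
qed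

end

context twosample
begin

abbreviation "\<Omega> \<equiv> perm_tuples n1 n2"
abbreviation "piL \<equiv> piL_law n1 n2"
abbreviation "joint \<equiv> joint_law n1 n2 P Q"

lemma Om_fin: "finite \<Omega>" by (rule perm_tuples_finite)
lemma Om_ne: "\<Omega> \<noteq> {}" using n12 by (rule perm_tuples_ne)

lemma set_piL: "set_pmf (pmf_of_set \<Omega>) = \<Omega>"
  using Om_fin Om_ne by simp

lemma joint_eq: "joint = data \<Otimes>\<^sub>M piL" by (simp add: joint_law_def)

sublocale PP: pair_prob_space data piL
proof -
  interpret A: prob_space data by (rule prob_data)
  interpret B: prob_space piL unfolding piL_law_def by (rule prob_space_measure_pmf)
  show "pair_prob_space data piL" by unfold_locales
qed

lemma int_piL: "integrable piL (f :: _ \<Rightarrow> real)"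
  unfolding piL_law_def by (rule integrable_measure_pmf_finite) (simp add: set_piL Om_fin)

lemma integral_piL: "(\<integral>y. f y \<partial>piL) = (\<Sum>y\<in>\<Omega>. f y) / real (card \<Omega>)"
  unfolding piL_law_def by (rule integral_pmf_of_set[OF Om_ne Om_fin])

lemma AE_piL: "(AE y in piL. Pr y) \<longleftrightarrow> (\<forall>y\<in>\<Omega>. Pr y)"
  unfolding piL_law_def by (simp add: AE_measure_pmf_iff set_piL)

lemma int_joint:
  fixes h :: "_ \<Rightarrow> real"
  assumes h: "h \<in> borel_measurable joint" and hi: "\<And>y. y \<in> \<Omega> \<Longrightarrow> integrable data (\<lambda>x. h (x, y))"
  shows "integrable joint h"
  unfolding joint_eq
proof (rule PP.Fubini_integrable)
  show "h \<in> borel_measurable (data \<Otimes>\<^sub>M piL)" using h by (simp add: joint_eq)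
  show "AE x in data. integrable piL (\<lambda>y. h (x, y))" by (simp add: int_piL)
  have "integrable data (\<lambda>x. (\<Sum>y\<in>\<Omega>. norm (h (x, y))) / real (card \<Omega>))"
    using hi by (intro Bochner_Integration.integrable_divide Bochner_Integration.integrable_sum integrable_norm) auto
  then show "integrable data (\<lambda>x. \<integral>y. norm (h (x, y)) \<partial>piL)"
    by (simp add: integral_piL)
qed

lemma integral_joint:
  fixes h :: "_ \<Rightarrow> real"
  assumes "integrable joint h"
  shows "(\<integral>\<omega>. h \<omega> \<partial>joint) = (\<integral>y. (\<integral>x. h (x, y) \<partial>data) \<partial>piL)"
proof -
  have "integrable (data \<Otimes>\<^sub>M piL) (case_prod (\<lambda>x y. h (x, y)))" using assms by (simp add: joint_eq)
  from PP.integral_snd[OF this] show ?thesis by (simp add: joint_eq)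
qed

lemma meas_coord:
  assumes k: "k < d"
  shows "(\<lambda>\<omega>. fst \<omega> (g (snd \<omega>)) k) \<in> borel_measurable joint"
proof (rule measurable_compose_countable[where f="\<lambda>m \<omega>. fst \<omega> m k" and g="\<lambda>\<omega>. g (snd \<omega>)"])
  show "(\<lambda>\<omega>. g (snd \<omega>)) \<in> measurable joint (count_space UNIV)"
  proof -
    have "g \<circ> snd \<in> measurable (data \<Otimes>\<^sub>M piL) (count_space UNIV)"
      by (rule measurable_comp[OF measurable_snd]) (simp add: piL_law_def)
    then show ?thesis by (simp add: comp_def joint_eq)
  qed
  fix m :: nat
  show "(\<lambda>\<omega>. fst \<omega> m k) \<in> borel_measurable joint"
  proof (cases "m < n1 + n2")
    case True
    have c: "(\<lambda>x. x m) \<in> measurable data (Mi m)"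
      unfolding data_eq using True by (intro measurable_component_singleton) simp
    have z: "(\<lambda>z. z k) \<in> borel_measurable (Mi m)" using iMi[OF k] by (rule borel_measurable_integrable)
    have "(\<lambda>x. x m k) \<in> borel_measurable data" using measurable_comp[OF c z] by (simp add: comp_def)
    from measurable_comp[OF measurable_fst this] show ?thesis by (simp add: comp_def joint_eq)
  next
    case False
    show ?thesis
    proof (rule measurable_cong[THEN iffD1])
      show "(\<lambda>\<omega>. undefined k :: real) \<in> borel_measurable joint" by simp
      fix \<omega> assume "\<omega> \<in> space joint"
      then have "fst \<omega> \<in> space data" unfolding joint_eq by (auto simp: space_pair_measure)
      then show "undefined k = fst \<omega> m k" using False unfolding data_eq by (auto simp: space_PiM PiE_def extensional_def)
    qed
  qed
qed

lemma U_joint_eq: "U_joint d n1 = (\<lambda>\<omega>. (1 / (real n1 * (real n1 - 1))) *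
     (\<Sum>i<n1. \<Sum>j\<in>{..<n1} - {i}. \<Sum>k<d.
        (fst \<omega> (fst (snd \<omega>) i) k - fst \<omega> (fst (snd \<omega>) (n1 + snd (snd \<omega>) ! i)) k) *
        (fst \<omega> (fst (snd \<omega>) j) k - fst \<omega> (fst (snd \<omega>) (n1 + snd (snd \<omega>) ! j)) k)))"
  by (simp add: U_joint_def U_stat_def ipd_def fun_diff_def fun_eq_iff)

lemma U_meas: "U_joint d n1 \<in> borel_measurable joint"
  unfolding U_joint_eq
  by (intro borel_measurable_times borel_measurable_const borel_measurable_sum borel_measurable_times borel_measurable_diff
       meas_coord[where g="\<lambda>y. fst y _"] meas_coord[where g="\<lambda>y. fst y (n1 + snd y ! _)"]) auto

end

context twosample
begin

abbreviation "FF \<equiv> piL_sigma n1 n2 P Q"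

definition F0 :: "(nat \<Rightarrow> nat) \<times> nat list \<Rightarrow> real" where
  "F0 y = ipd d \<delta> \<delta> * Yv n1 (fst y) (snd y)"

lemma snd_space: "snd \<in> space joint \<rightarrow> space piL"
  by (auto simp: joint_eq space_pair_measure)

lemma subalg: "subalgebra joint FF"
  unfolding subalgebra_def piL_sigma_def
proof
  show "space (vimage_algebra (space joint) snd piL) = space joint" by simp
  show "sets (vimage_algebra (space joint) snd piL) \<subseteq> sets joint"
    unfolding sets_vimage_algebra2[OF snd_space]
  proof safe
    fix A assume "A \<in> sets piL"
    have "snd \<in> measurable joint piL" unfolding joint_eq by (rule measurable_snd)
    then show "snd -` A \<inter> space joint \<in> sets joint" using \<open>A \<in> sets piL\<close> by (rule measurable_sets)
  qed
qed

lemma SFs: "sigma_finite_subalgebra joint FF"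
proof -
  have "finite_measure_subalgebra joint FF"
    unfolding finite_measure_subalgebra_def finite_measure_subalgebra_axioms_def
    using subalg PP.P.finite_measure_axioms by (simp add: joint_eq)
  then show "sigma_finite_subalgebra joint FF" by (rule finite_measure_subalgebra_is_sigma_finite)
qed


lemma G_measF: "(\<lambda>\<omega>. h (snd \<omega>) :: real) \<in> borel_measurable FF"
proof -
  have "snd \<in> measurable FF piL" unfolding piL_sigma_def by (rule measurable_vimage_algebra1[OF snd_space])
  moreover have "h \<in> borel_measurable piL" by (simp add: piL_law_def)
  ultimately have "h \<circ> snd \<in> borel_measurable FF" by (rule measurable_comp)
  then show ?thesis by (simp add: comp_def)
qed

lemma G_meas: "(\<lambda>\<omega>. h (snd \<omega>) :: real) \<in> borel_measurable joint"
  by (rule measurable_from_subalg[OF subalg G_measF])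

lemma G_int: "integrable joint (\<lambda>\<omega>. h (snd \<omega>) :: real)"
  by (rule int_joint[OF G_meas]) (simp add: PP.M1.integrable_const)

lemma G_integral: "(\<integral>\<omega>. h (snd \<omega>) \<partial>joint) = (\<Sum>y\<in>\<Omega>. h y) / real (card \<Omega>)"
  using integral_joint[OF G_int, of h] PP.M1.prob_space by (simp add: integral_piL)

lemma U_int: "integrable joint (U_joint d n1)"
  by (rule int_joint[OF U_meas]) (use U_expect(1) in \<open>auto simp: U_joint_def\<close>)


lemma condexp_eq: "AE \<omega> in joint. E_Lpi d n1 n2 P Q \<omega> = F0 (snd \<omega>)"
  unfolding E_Lpi_def
proof (rule sigma_finite_subalgebra.real_cond_exp_charact[OF SFs])
  show "integrable joint (U_joint d n1)" by (rule U_int)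
  show "integrable joint (\<lambda>\<omega>. F0 (snd \<omega>))" by (rule G_int)
  show "(\<lambda>\<omega>. F0 (snd \<omega>)) \<in> borel_measurable FF" by (rule G_measF)
  fix A assume A: "A \<in> sets FF"
  then obtain B where B: "A = snd -` B \<inter> space joint"
    unfolding piL_sigma_def sets_vimage_algebra2[OF snd_space] by blast
  have Aj: "A \<in> sets joint" using A subalg by (auto simp: subalgebra_def)
  have ind: "indicator A \<omega> = (indicator B (snd \<omega>) :: real)" if "\<omega> \<in> space joint" for \<omega>
    using that by (simp add: B indicator_def)
  have i1: "integrable joint (\<lambda>\<omega>. indicator B (snd \<omega>) * U_joint d n1 \<omega>)"
  proof -
    have "integrable joint (\<lambda>\<omega>. indicator A \<omega> *\<^sub>R U_joint d n1 \<omega>)"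
      by (rule integrable_mult_indicator[OF Aj U_int])
    moreover have "integrable joint (\<lambda>\<omega>. indicator A \<omega> *\<^sub>R U_joint d n1 \<omega>) = integrable joint (\<lambda>\<omega>. indicator B (snd \<omega>) * U_joint d n1 \<omega>)"
      by (rule Bochner_Integration.integrable_cong[OF refl]) (simp add: ind)
    ultimately show ?thesis by simp
  qed
  have i2: "integrable joint (\<lambda>\<omega>. indicator B (snd \<omega>) * F0 (snd \<omega>))"
    by (rule G_int)
  have "(\<integral>\<omega>\<in>A. U_joint d n1 \<omega> \<partial>joint) = (\<integral>\<omega>. indicator B (snd \<omega>) * U_joint d n1 \<omega> \<partial>joint)"
    unfolding set_lebesgue_integral_def by (intro Bochner_Integration.integral_cong refl) (simp add: ind)
  also have "\<dots> = (\<integral>y. (\<integral>x. indicator B y * U_joint d n1 (x, y) \<partial>data) \<partial>piL)"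
    using integral_joint[OF i1] by simp
  also have "\<dots> = (\<integral>y. indicator B y * F0 y \<partial>piL)"
  proof (rule integral_cong_AE)
    show "AE y in piL. (\<integral>x. indicator B y * U_joint d n1 (x, y) \<partial>data) = indicator B y * F0 y"
      unfolding AE_piL
    proof
      fix y assume y: "y \<in> \<Omega>"
      obtain p l where pl: "y = (p, l)" by fastforce
      show "(\<integral>x. indicator B y * U_joint d n1 (x, y) \<partial>data) = indicator B y * F0 y"
        using U_expect(2)[of p l] y by (simp add: pl U_joint_def F0_def)
    qed
  qed (simp_all add: piL_law_def)
  also have "\<dots> = (\<integral>y. (\<integral>x. indicator B y * F0 y \<partial>data) \<partial>piL)"
    using PP.M1.prob_space by simp
  also have "\<dots> = (\<integral>\<omega>. indicator B (snd \<omega>) * F0 (snd \<omega>) \<partial>joint)"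
    using integral_joint[OF i2] by simp
  also have "\<dots> = (\<integral>\<omega>\<in>A. F0 (snd \<omega>) \<partial>joint)"
    unfolding set_lebesgue_integral_def by (intro Bochner_Integration.integral_cong refl) (simp add: ind)
  finally show "(\<integral>\<omega>\<in>A. U_joint d n1 \<omega> \<partial>joint) = (\<integral>\<omega>\<in>A. F0 (snd \<omega>) \<partial>joint)" .
qed

end

context twosample
begin

lemma SE_final:
  assumes S: "SEa \<Omega> F0 \<sigma>"
  shows "SE joint (E_Lpi d n1 n2 P Q) \<sigma>"
  unfolding SE_def
proof (intro allI impI conjI)
  fix t :: real assume t: "\<sigma> * \<bar>t\<bar> \<le> 1"
  let ?E = "E_Lpi d n1 n2 P Q"
  have Em: "?E \<in> borel_measurable joint"
    unfolding E_Lpi_def by (rule borel_measurable_cond_exp2)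
  have AE: "AE \<omega> in joint. ?E \<omega> = F0 (snd \<omega>)" by (rule condexp_eq)
  have IE: "(\<integral>\<omega>. ?E \<omega> \<partial>joint) = avg \<Omega> F0"
  proof -
    have "(\<integral>\<omega>. ?E \<omega> \<partial>joint) = (\<integral>\<omega>. F0 (snd \<omega>) \<partial>joint)"
      by (rule integral_cong_AE[OF Em G_meas AE])
    also have "\<dots> = avg \<Omega> F0" by (simp add: G_integral avg_def)
    finally show ?thesis .
  qed
  define h where "h y = exp (t * (F0 y - avg \<Omega> F0))" for y
  have m1: "(\<lambda>\<omega>. exp (t * (?E \<omega> - (\<integral>\<omega>'. ?E \<omega>' \<partial>joint)))) \<in> borel_measurable joint"
  proof -
    have "(\<lambda>\<omega>. t * (?E \<omega> - (\<integral>\<omega>'. ?E \<omega>' \<partial>joint))) \<in> borel_measurable joint"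
      using Em by (intro borel_measurable_times borel_measurable_diff borel_measurable_const)
    from measurable_comp[OF this borel_measurable_exp] show ?thesis by (simp add: comp_def)
  qed
  have AE2: "AE \<omega> in joint. exp (t * (?E \<omega> - (\<integral>\<omega>'. ?E \<omega>' \<partial>joint))) = h (snd \<omega>)"
    using AE by (rule eventually_mono) (simp add: IE h_def)
  show "integrable joint (\<lambda>\<omega>. exp (t * (?E \<omega> - (\<integral>\<omega>'. ?E \<omega>' \<partial>joint))))"
    using integrable_cong_AE[OF m1 G_meas AE2] G_int by blast
  have "(\<integral>\<omega>. exp (t * (?E \<omega> - (\<integral>\<omega>'. ?E \<omega>' \<partial>joint))) \<partial>joint) = (\<integral>\<omega>. h (snd \<omega>) \<partial>joint)"
    by (rule integral_cong_AE[OF m1 G_meas AE2])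
  also have "\<dots> = avg \<Omega> (\<lambda>y. exp (t * (F0 y - avg \<Omega> F0)))"
    unfolding G_integral[of h] by (simp add: avg_def h_def)
  also have "\<dots> \<le> exp (t\<^sup>2 * \<sigma>\<^sup>2)" using S t unfolding SEa_def by blast
  finally show "(\<integral>\<omega>. exp (t * (?E \<omega> - (\<integral>\<omega>'. ?E \<omega>' \<partial>joint))) \<partial>joint) \<le> exp (t\<^sup>2 * \<sigma>\<^sup>2)" .
qed

lemma ipd_nonneg: "ipd d \<delta> \<delta> \<ge> 0"
  unfolding ipd_def by (intro sum_nonneg) simp

lemma main_local:
  assumes n1: "2 \<le> n1"
  shows "SE joint (E_Lpi d n1 n2 P Q) (C3 * ipd d (mean_vec P - mean_vec Q) (mean_vec P - mean_vec Q) / real n1)"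
proof -
  have "SEa \<Omega> (\<lambda>\<omega>. ipd d \<delta> \<delta> * Yv n1 (fst \<omega>) (snd \<omega>)) (ipd d \<delta> \<delta> * (C3 / real n1))"
    by (rule SEa_scale[OF part3[OF n1 n12] ipd_nonneg])
  moreover have "(\<lambda>\<omega>. ipd d \<delta> \<delta> * Yv n1 (fst \<omega>) (snd \<omega>)) = F0" by (simp add: F0_def fun_eq_iff)
  ultimately have S1: "SEa \<Omega> F0 (ipd d \<delta> \<delta> * (C3 / real n1))" by simp
  have eqs: "ipd d \<delta> \<delta> * (C3 / real n1) = C3 * ipd d (mean_vec P - mean_vec Q) (mean_vec P - mean_vec Q) / real n1"
    unfolding \<delta>_def by simp
  from S1 have "SEa \<Omega> F0 (C3 * ipd d (mean_vec P - mean_vec Q) (mean_vec P - mean_vec Q) / real n1)"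
    unfolding eqs .
  then show ?thesis by (rule SE_final)
qed

end

theorem mainTheorem5:
  "\<exists>C'>0. \<forall>(d::nat) (n1::nat) (n2::nat) (P::(nat \<Rightarrow> real) measure) (Q::(nat \<Rightarrow> real) measure).
     2 \<le> n1 \<longrightarrow> n1 \<le> n2 \<longrightarrow>
     prob_space P \<longrightarrow> sets P = sets borel \<longrightarrow>
     prob_space Q \<longrightarrow> sets Q = sets borel \<longrightarrow>
     subgaussian_vec d P \<longrightarrow> subgaussian_vec d Q \<longrightarrow>
     SE (joint_law n1 n2 P Q) (E_Lpi d n1 n2 P Q)
        (C' * ipd d (mean_vec P - mean_vec Q) (mean_vec P - mean_vec Q) / real n1)"
proof (intro exI[of _ C3] conjI allI impI)
  show "C3 > 0" by (rule C3_pos)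
  fix d n1 n2 :: nat and P Q :: "(nat \<Rightarrow> real) measure"
  assume n1: "2 \<le> n1" and n12: "n1 \<le> n2" and P: "prob_space P" and sP: "sets P = sets borel"
    and Q: "prob_space Q" and sQ: "sets Q = sets borel"
    and gP: "subgaussian_vec d P" and gQ: "subgaussian_vec d Q"
  interpret twosample d n1 n2 P Q
  proof -
    have iP: "\<And>k. k < d \<Longrightarrow> integrable P (\<lambda>x. x k)" using gP unfolding subgaussian_vec_def by blast
    have iQ: "\<And>k. k < d \<Longrightarrow> integrable Q (\<lambda>x. x k)" using gQ unfolding subgaussian_vec_def by blast
    show "twosample d n1 n2 P Q" by (intro twosample.intro P Q sP sQ iP iQ n12)
  qed
  show "SE (joint_law n1 n2 P Q) (E_Lpi d n1 n2 P Q)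
        (C3 * ipd d (mean_vec P - mean_vec Q) (mean_vec P - mean_vec Q) / real n1)"
    by (rule main_local[OF n1])
qed


end
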